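(* Let $n\ge 2$ and $\Omega_Q=\{0,1\}^n$. For $i\neq j$ let $T^{(i,j)}$ be the Markov matrix on $\Omega_Q$ that deterministically swaps coordinates $i$ and $j$ of $\vec q$, let $T_p=\frac{1}{n(n-1)}\sum_{i\neq j}T^{(i,j)}$ and $T=\frac1n I+\frac{n-1}{n}T_p$. For $\sigma\in S_n$ let $[\sigma(\vec q)]_i=q_{\sigma^{-1}(i)}$, and for a probability distribution $\nu$ on $\Omega_Q$ let $\nu S=\frac{1}{n!}\sum_{\sigma\in S_n}\nu(\sigma(\cdot))$ (the distribution obtained by applying a uniformly random permutation of coordinates). Then every probability distribution $\nu$ on $\Omega_Q$ satisfies $\nu T^t\to\nu S$ as $t\to\infty$. Moreover, defining $$t_{mixT}(\varepsilon)=\max_{\nu}\min\{t:\|\nu T^t-\nu S\|_{TV}\le\varepsilon\},$$ where the maximum is over all probability distributions $\nu$ on $\Omega_Q$, one has $t_{mixT}(\varepsilon)=\Theta(n\ln(n/\varepsilon))$.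
   Context: $\|\mu-\mu'\|_{TV}=\frac12\sum_x|\mu(x)-\mu'(x)|$. Distributions are row vectors and Markov matrices act on the right. *)

theory Defs
  imports "HOL-Analysis.Analysis" "HOL-Combinatorics.Permutations"
begin

text \<open>State space Omega_Q = {0,1}^n, coordinates indexed 0..n-1, as boolean lists of length n.\<close>
definition OmegaQ :: "nat \<Rightarrow> bool list set" where
  "OmegaQ n = {q. length q = n}"

definition is_dist :: "nat \<Rightarrow> (bool list \<Rightarrow> real) \<Rightarrow> bool" where
  "is_dist n \<nu> \<longleftrightarrow> (\<forall>q\<in>OmegaQ n. 0 \<le> \<nu> q) \<and> (\<forall>q. q \<notin> OmegaQ n \<longrightarrow> \<nu> q = 0)
     \<and> (\<Sum>q\<in>OmegaQ n. \<nu> q) = 1"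

type_synonym qmat = "bool list \<Rightarrow> bool list \<Rightarrow> real"

definition vecmat :: "nat \<Rightarrow> (bool list \<Rightarrow> real) \<Rightarrow> qmat \<Rightarrow> (bool list \<Rightarrow> real)" where
  "vecmat n \<nu> M = (\<lambda>y. \<Sum>x\<in>OmegaQ n. \<nu> x * M x y)"

definition matmul :: "nat \<Rightarrow> qmat \<Rightarrow> qmat \<Rightarrow> qmat" where
  "matmul n A B = (\<lambda>x z. \<Sum>y\<in>OmegaQ n. A x y * B y z)"

definition idmat :: qmat where
  "idmat = (\<lambda>x y. if x = y then 1 else 0)"

fun matpow :: "nat \<Rightarrow> qmat \<Rightarrow> nat \<Rightarrow> qmat" where
  "matpow n M 0 = idmat"
| "matpow n M (Suc t) = matmul n (matpow n M t) M"

definition swapQ :: "nat \<Rightarrow> nat \<Rightarrow> bool list \<Rightarrow> bool list" where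
  "swapQ i j q = q[i := q ! j, j := q ! i]"

definition Tswap :: "nat \<Rightarrow> nat \<Rightarrow> qmat" where
  "Tswap i j = (\<lambda>x y. if y = swapQ i j x then 1 else 0)"

definition Tp :: "nat \<Rightarrow> qmat" where
  "Tp n = (\<lambda>x y. (1 / (real n * (real n - 1))) *
      (\<Sum>(i,j)\<in>{(i,j). i < n \<and> j < n \<and> i \<noteq> j}. Tswap i j x y))"

definition Tm :: "nat \<Rightarrow> qmat" where
  "Tm n = (\<lambda>x y. (1 / real n) * idmat x y + ((real n - 1) / real n) * Tp n x y)"

definition permQ :: "nat \<Rightarrow> (nat \<Rightarrow> nat) \<Rightarrow> bool list \<Rightarrow> bool list" where
  "permQ n \<sigma> q = map (\<lambda>i. q ! inv \<sigma> i) [0..<n]"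

definition symm :: "nat \<Rightarrow> (bool list \<Rightarrow> real) \<Rightarrow> (bool list \<Rightarrow> real)" where
  "symm n \<nu> = (\<lambda>q. if q \<in> OmegaQ n then
      (1 / fact n) * (\<Sum>\<sigma>\<in>{\<sigma>. \<sigma> permutes {..<n}}. \<nu> (permQ n \<sigma> q)) else 0)"

definition tv :: "nat \<Rightarrow> (bool list \<Rightarrow> real) \<Rightarrow> (bool list \<Rightarrow> real) \<Rightarrow> real" where
  "tv n \<mu> \<mu>' = (1/2) * (\<Sum>q\<in>OmegaQ n. \<bar>\<mu> q - \<mu>' q\<bar>)"

definition tmixT :: "nat \<Rightarrow> real \<Rightarrow> nat" where
  "tmixT n \<epsilon> = Sup ((\<lambda>\<nu>. LEAST t. tv n (vecmat n \<nu> (matpow n (Tm n) t)) (symm n \<nu>) \<le> \<epsilon>)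
                    ` {\<nu>. is_dist n \<nu>})"

end

theory Submission
  imports Defs
begin


lemma finite_OmegaQ[simp]: "finite (OmegaQ n)"
proof -
  have "finite {xs. set xs \<subseteq> (UNIV::bool set) \<and> length xs = n}"
    by (rule finite_lists_length_eq) simp
  then show ?thesis by (simp add: OmegaQ_def)
qed

lemma length_swapQ[simp]: "length (swapQ i j q) = length q"
  by (simp add: swapQ_def)

lemma swapQ_nth: "i < length q \<Longrightarrow> j < length q \<Longrightarrow> a < length q \<Longrightarrow>
   swapQ i j q ! a = q ! Transposition.transpose i j a"
  by (auto simp: swapQ_def transpose_def nth_list_update)

lemma swapQ_in[simp]: "swapQ i j q \<in> OmegaQ n \<longleftrightarrow> q \<in> OmegaQ n"
  by (simp add: OmegaQ_def)


lemma sum_split2: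
  fixes h :: "nat \<Rightarrow> real"
  assumes "a < n" "b < n" "a \<noteq> b"
  shows "(\<Sum>i<n. h i) = h a + h b + (\<Sum>i\<in>{..<n}-{a,b}. h i)"
proof -
  have "{..<n} = insert a (insert b ({..<n}-{a,b}))" using assms by auto
  then have "(\<Sum>i<n. h i) = (\<Sum>i\<in>insert a (insert b ({..<n}-{a,b})). h i)" by simp
  also have "\<dots> = h a + h b + (\<Sum>i\<in>{..<n}-{a,b}. h i)" using assms by simp
  finally show ?thesis .
qed

lemma card_R: "a < n \<Longrightarrow> b < n \<Longrightarrow> a \<noteq> b \<Longrightarrow> card ({..<n}-{a,b}) = n - 2"
  by (simp add: card_Diff_subset)

lemma two_point:
  fixes F :: "nat \<Rightarrow> nat \<Rightarrow> real"
  assumes ab: "a < n" "b < n" "a \<noteq> b"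
  shows "(\<Sum>i<n. \<Sum>j<n. F (Transposition.transpose i j a) (Transposition.transpose i j b))
     = ((real n - 2)^2 + 2) * F a b + 2 * F b a
       + 2 * (\<Sum>c\<in>{..<n}-{a,b}. F c b + F a c)"
proof -
  define R where "R = {..<n}-{a,b}"
  have cR: "real (card R) = real n - 2" using card_R[OF ab] ab unfolding R_def by auto
  let ?H = "\<lambda>i. \<Sum>j<n. F (Transposition.transpose i j a) (Transposition.transpose i j b)"
  have Ha: "?H a = F a b + F b a + (\<Sum>j\<in>R. F j b)"
  proof -
    have "?H a = F a b + F b a + (\<Sum>j\<in>R. F (Transposition.transpose a j a) (Transposition.transpose a j b))"
      using sum_split2[OF ab, of "\<lambda>j. F (Transposition.transpose a j a) (Transposition.transpose a j b)"] ab
      unfolding R_def by (simp add: transpose_def)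
    also have "(\<Sum>j\<in>R. F (Transposition.transpose a j a) (Transposition.transpose a j b)) = (\<Sum>j\<in>R. F j b)"
      by (rule sum.cong) (use ab in \<open>auto simp: R_def transpose_def\<close>)
    finally show ?thesis .
  qed
  have Hb: "?H b = F b a + F a b + (\<Sum>j\<in>R. F a j)"
  proof -
    have "?H b = F b a + F a b + (\<Sum>j\<in>R. F (Transposition.transpose b j a) (Transposition.transpose b j b))"
      using sum_split2[OF ab, of "\<lambda>j. F (Transposition.transpose b j a) (Transposition.transpose b j b)"] ab
      unfolding R_def by (simp add: transpose_def)
    also have "(\<Sum>j\<in>R. F (Transposition.transpose b j a) (Transposition.transpose b j b)) = (\<Sum>j\<in>R. F a j)"
      by (rule sum.cong) (use ab in \<open>auto simp: R_def transpose_def\<close>)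
    finally show ?thesis .
  qed
  have Hi: "?H i = F i b + F a i + (real n - 2) * F a b" if "i \<in> R" for i
  proof -
    have "?H i = F i b + F a i + (\<Sum>j\<in>R. F (Transposition.transpose i j a) (Transposition.transpose i j b))"
      using sum_split2[OF ab, of "\<lambda>j. F (Transposition.transpose i j a) (Transposition.transpose i j b)"] ab that
      unfolding R_def by (simp add: transpose_def)
    also have "(\<Sum>j\<in>R. F (Transposition.transpose i j a) (Transposition.transpose i j b)) = (\<Sum>j\<in>R. F a b)"
      by (rule sum.cong) (use that ab in \<open>auto simp: R_def transpose_def\<close>)
    also have "\<dots> = (real n - 2) * F a b" using cR by simp
    finally show ?thesis .
  qed
  have "(\<Sum>i<n. ?H i) = ?H a + ?H b + (\<Sum>i\<in>R. ?H i)"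
    using sum_split2[OF ab, of ?H] unfolding R_def by simp
  also have "(\<Sum>i\<in>R. ?H i) = (\<Sum>i\<in>R. F i b + F a i + (real n - 2) * F a b)"
    using Hi by (rule sum.cong[OF refl])
  also have "\<dots> = (\<Sum>i\<in>R. F i b + F a i) + (real n - 2) * (real n - 2) * F a b"
    using cR by (simp add: sum.distrib)
  finally show ?thesis unfolding Ha Hb R_def[symmetric]
    by (simp add: sum.distrib power2_eq_square algebra_simps)
qed


lemma one_point:
  fixes h :: "nat \<Rightarrow> real"
  assumes "2 \<le> n" "a < n"
  shows "(\<Sum>i<n. \<Sum>j<n. h (Transposition.transpose i j a))
     = (real n ^ 2 - 2 * real n) * h a + 2 * (\<Sum>c<n. h c)"
proof -
  define b where "b = (if a = 0 then 1 else 0::nat)"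
  have ab: "a < n" "b < n" "a \<noteq> b" using assms by (auto simp: b_def)
  have "(\<Sum>i<n. \<Sum>j<n. h (Transposition.transpose i j a))
     = ((real n - 2)^2 + 2) * h a + 2 * h b + 2 * (\<Sum>c\<in>{..<n}-{a,b}. h c + h a)"
    using two_point[OF ab, of "\<lambda>c e. h c"] by simp
  also have "(\<Sum>c\<in>{..<n}-{a,b}. h c + h a) = (\<Sum>c\<in>{..<n}-{a,b}. h c) + (real n - 2) * h a"
    using card_R[OF ab] ab by (simp add: sum.distrib of_nat_diff)
  also have "(\<Sum>c<n. h c) = h a + h b + (\<Sum>c\<in>{..<n}-{a,b}. h c)"
    by (rule sum_split2[OF ab])
  ultimately show ?thesis by (simp add: power2_eq_square algebra_simps)
qed

definition Top :: "nat \<Rightarrow> (bool list \<Rightarrow> real) \<Rightarrow> bool list \<Rightarrow> real" where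
  "Top n f = (\<lambda>q. \<Sum>y\<in>OmegaQ n. Tm n q y * f y)"

lemma sum_Tswap: "q \<in> OmegaQ n \<Longrightarrow> (\<Sum>y\<in>OmegaQ n. Tswap i j q y * f y) = f (swapQ i j q)"
proof -
  assume q: "q \<in> OmegaQ n"
  have "(\<Sum>y\<in>OmegaQ n. Tswap i j q y * f y) = (\<Sum>y\<in>OmegaQ n. if y = swapQ i j q then f (swapQ i j q) else 0)"
    by (rule sum.cong) (auto simp: Tswap_def)
  also have "\<dots> = f (swapQ i j q)" using q by simp
  finally show ?thesis .
qed

lemma swapQ_diag[simp]: "swapQ i i q = q"
  by (simp add: swapQ_def)

lemma Top_eq:
  assumes n: "2 \<le> n" and q: "q \<in> OmegaQ n"
  shows "Top n f q = (\<Sum>i<n. \<Sum>j<n. f (swapQ i j q)) / real n ^ 2"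
proof -
  define Off where "Off = {(i,j). i < n \<and> j < n \<and> i \<noteq> j}"
  have fin: "finite Off" unfolding Off_def
    by (rule finite_subset[of _ "{..<n} \<times> {..<n}"]) auto
  have S1: "(\<Sum>y\<in>OmegaQ n. idmat q y * f y) = f q"
  proof -
    have "(\<Sum>y\<in>OmegaQ n. idmat q y * f y) = (\<Sum>y\<in>OmegaQ n. if q = y then f q else 0)"
      by (rule sum.cong) (auto simp: idmat_def)
    also have "\<dots> = f q" using q by simp
    finally show ?thesis .
  qed
  have S2: "(\<Sum>y\<in>OmegaQ n. (\<Sum>(i,j)\<in>Off. Tswap i j q y) * f y) = (\<Sum>(i,j)\<in>Off. f (swapQ i j q))"
  proof -
    have "(\<Sum>y\<in>OmegaQ n. (\<Sum>(i,j)\<in>Off. Tswap i j q y) * f y)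
        = (\<Sum>y\<in>OmegaQ n. \<Sum>p\<in>Off. Tswap (fst p) (snd p) q y * f y)"
      by (simp add: sum_distrib_right case_prod_beta)
    also have "\<dots> = (\<Sum>p\<in>Off. \<Sum>y\<in>OmegaQ n. Tswap (fst p) (snd p) q y * f y)"
      by (rule sum.swap)
    also have "\<dots> = (\<Sum>p\<in>Off. f (swapQ (fst p) (snd p) q))"
      using q by (simp add: sum_Tswap)
    finally show ?thesis by (simp add: case_prod_beta)
  qed
  have S3: "(\<Sum>i<n. \<Sum>j<n. f (swapQ i j q)) = (\<Sum>(i,j)\<in>Off. f (swapQ i j q)) + real n * f q"
  proof -
    have "(\<Sum>i<n. \<Sum>j<n. f (swapQ i j q)) = (\<Sum>(i,j)\<in>{..<n}\<times>{..<n}. f (swapQ i j q))"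
      by (simp add: sum.cartesian_product)
    also have "{..<n}\<times>{..<n} = Off \<union> (\<lambda>i. (i,i)) ` {..<n}" unfolding Off_def by auto
    also have "(\<Sum>(i,j)\<in>Off \<union> (\<lambda>i. (i,i)) ` {..<n}. f (swapQ i j q))
       = (\<Sum>(i,j)\<in>Off. f (swapQ i j q)) + (\<Sum>(i,j)\<in>(\<lambda>i. (i,i)) ` {..<n}. f (swapQ i j q))"
      by (rule sum.union_disjoint) (use fin in \<open>auto simp: Off_def\<close>)
    also have "(\<Sum>(i,j)\<in>(\<lambda>i. (i,i)) ` {..<n}. f (swapQ i j q)) = real n * f q"
      by (subst sum.reindex) (auto simp: inj_on_def)
    finally show ?thesis .
  qed
  have nn: "real n \<noteq> 0" "real n - 1 \<noteq> 0" using n by auto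
  have "Top n f q = (1 / real n) * f q + ((real n - 1) / real n) * (1 / (real n * (real n - 1)))
          * (\<Sum>(i,j)\<in>Off. f (swapQ i j q))"
  proof -
    have "Top n f q = (\<Sum>y\<in>OmegaQ n. (1 / real n) * (idmat q y * f y)
         + ((real n - 1) / real n) * (1 / (real n * (real n - 1))) * ((\<Sum>(i,j)\<in>Off. Tswap i j q y) * f y))"
      unfolding Top_def Tm_def Tp_def Off_def[symmetric]
      by (rule sum.cong) (auto simp: algebra_simps)
    also have "\<dots> = (1 / real n) * (\<Sum>y\<in>OmegaQ n. idmat q y * f y)
         + ((real n - 1) / real n) * (1 / (real n * (real n - 1))) * (\<Sum>y\<in>OmegaQ n. (\<Sum>(i,j)\<in>Off. Tswap i j q y) * f y)"
      by (simp add: sum.distrib sum_distrib_left)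
    finally show ?thesis using S1 S2 by simp
  qed
  also have "\<dots> = (real n * f q + (\<Sum>(i,j)\<in>Off. f (swapQ i j q))) / real n ^ 2"
    using nn by (simp add: field_simps power2_eq_square)
  finally show ?thesis using S3 by simp
qed


definition EE :: "nat \<Rightarrow> nat \<Rightarrow> bool list \<Rightarrow> (bool list \<Rightarrow> real) \<Rightarrow> real" where
  "EE n t q f = (\<Sum>z\<in>OmegaQ n. matpow n (Tm n) t q z * f z)"

lemma EE_Suc: "EE n (Suc t) q f = EE n t q (Top n f)"
proof -
  have "EE n (Suc t) q f = (\<Sum>z\<in>OmegaQ n. \<Sum>y\<in>OmegaQ n. matpow n (Tm n) t q y * Tm n y z * f z)"
    by (simp add: EE_def matmul_def sum_distrib_right)
  also have "\<dots> = (\<Sum>y\<in>OmegaQ n. \<Sum>z\<in>OmegaQ n. matpow n (Tm n) t q y * (Tm n y z * f z))"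
    by (subst sum.swap) (simp add: mult.assoc)
  also have "\<dots> = EE n t q (Top n f)"
    by (simp add: EE_def Top_def sum_distrib_left)
  finally show ?thesis .
qed

lemma EE_0: "q \<in> OmegaQ n \<Longrightarrow> EE n 0 q f = f q"
proof -
  assume q: "q \<in> OmegaQ n"
  have "EE n 0 q f = (\<Sum>z\<in>OmegaQ n. if q = z then f q else 0)"
    unfolding EE_def by (rule sum.cong) (auto simp: idmat_def)
  also have "\<dots> = f q" using q by simp
  finally show ?thesis .
qed

lemma EE_iter: "q \<in> OmegaQ n \<Longrightarrow> EE n t q f = (Top n ^^ t) f q"
proof (induction t arbitrary: f)
  case 0 then show ?case by (simp add: EE_0)
next
  case (Suc t)
  then show ?case by (simp add: EE_Suc funpow_Suc_right del: funpow.simps)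
qed

lemma vecmat_sum: "(\<Sum>z\<in>OmegaQ n. vecmat n \<nu> (matpow n M t) z * f z)
   = (\<Sum>x\<in>OmegaQ n. \<nu> x * (\<Sum>z\<in>OmegaQ n. matpow n M t x z * f z))"
  unfolding vecmat_def
  by (simp add: sum_distrib_left sum_distrib_right mult.assoc) (rule sum.swap)

lemma vecmat_EE: "(\<Sum>z\<in>OmegaQ n. vecmat n \<nu> (matpow n (Tm n) t) z * f z)
   = (\<Sum>x\<in>OmegaQ n. \<nu> x * (Top n ^^ t) f x)"
  unfolding vecmat_sum EE_def[symmetric] by (rule sum.cong) (simp_all add: EE_iter)

lemma Top_lin: "Top n (\<lambda>y. a * f y + b * g y) q = a * Top n f q + b * Top n g q"
  by (simp add: Top_def algebra_simps sum.distrib sum_distrib_left)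

lemma Top_cong: "(\<And>y. y \<in> OmegaQ n \<Longrightarrow> f y = g y) \<Longrightarrow> Top n f q = Top n g q"
  by (simp add: Top_def)

lemma Top_const: "2 \<le> n \<Longrightarrow> q \<in> OmegaQ n \<Longrightarrow> Top n (\<lambda>y. c) q = c"
  by (simp add: Top_eq power2_eq_square)

lemma Top_mono: "2 \<le> n \<Longrightarrow> q \<in> OmegaQ n \<Longrightarrow> (\<And>y. y \<in> OmegaQ n \<Longrightarrow> f y \<le> g y) \<Longrightarrow>
   Top n f q \<le> Top n g q"
  by (simp add: Top_eq divide_right_mono sum_mono)

lemma It_cong: "(\<And>y. y \<in> OmegaQ n \<Longrightarrow> f y = g y) \<Longrightarrow> q \<in> OmegaQ n \<Longrightarrow>
    (Top n ^^ t) f q = (Top n ^^ t) g q"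
proof (induction t arbitrary: q)
  case 0 then show ?case by simp
next
  case (Suc t) then show ?case by (simp add: Top_def)
qed

lemma It_lin: "q \<in> OmegaQ n \<Longrightarrow> (Top n ^^ t) (\<lambda>y. a * f y + b * g y) q = a * (Top n ^^ t) f q + b * (Top n ^^ t) g q"
proof (induction t arbitrary: q)
  case 0 then show ?case by simp
next
  case (Suc t)
  have "(Top n ^^ Suc t) (\<lambda>y. a * f y + b * g y) q = Top n ((Top n ^^ t) (\<lambda>y. a * f y + b * g y)) q"
    by simp
  also have "\<dots> = Top n (\<lambda>y. a * (Top n ^^ t) f y + b * (Top n ^^ t) g y) q"
    by (rule Top_cong) (simp add: Suc.IH)
  finally have "(Top n ^^ Suc t) (\<lambda>y. a * f y + b * g y) q = Top n (\<lambda>y. a * (Top n ^^ t) f y + b * (Top n ^^ t) g y) q" .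
  then show ?case by (simp add: Top_lin)
qed

lemma It_const: "2 \<le> n \<Longrightarrow> q \<in> OmegaQ n \<Longrightarrow> (Top n ^^ t) (\<lambda>y. c) q = c"
proof (induction t arbitrary: q)
  case 0 then show ?case by simp
next
  case (Suc t)
  have "(Top n ^^ Suc t) (\<lambda>y. c) q = Top n ((Top n ^^ t) (\<lambda>y. c)) q" by simp
  also have "\<dots> = Top n (\<lambda>y. c) q" by (rule Top_cong) (simp add: Suc.IH Suc.prems)
  finally have "(Top n ^^ Suc t) (\<lambda>y. c) q = Top n (\<lambda>y. c) q" .
  then show ?case using Suc by (simp add: Top_const)
qed

lemma It_mono: "2 \<le> n \<Longrightarrow> q \<in> OmegaQ n \<Longrightarrow> (\<And>y. y \<in> OmegaQ n \<Longrightarrow> f y \<le> g y) \<Longrightarrow>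
   (Top n ^^ t) f q \<le> (Top n ^^ t) g q"
proof (induction t arbitrary: q)
  case 0 then show ?case by simp
next
  case (Suc t)
  then show ?case by (simp add: Top_mono)
qed


definition cnt :: "nat \<Rightarrow> bool list \<Rightarrow> nat" where
  "cnt n q = card {a. a < n \<and> q ! a}"

lemma permQ_len[simp]: "length (permQ n \<sigma> q) = n"
  by (simp add: permQ_def)

lemma permQ_in[simp]: "permQ n \<sigma> q \<in> OmegaQ n"
  by (simp add: OmegaQ_def)

lemma permQ_nth: "l < n \<Longrightarrow> permQ n \<sigma> q ! l = q ! inv \<sigma> l"
  by (simp add: permQ_def)

lemma perm_lt: "\<sigma> permutes {..<n} \<Longrightarrow> l < n \<Longrightarrow> \<sigma> l < n"
  using permutes_in_image[of \<sigma> "{..<n}" l] by simp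

lemma permQ_inv:
  assumes s: "\<sigma> permutes {..<n}" and q: "q \<in> OmegaQ n"
  shows "permQ n \<sigma> (permQ n (inv \<sigma>) q) = q"
proof (rule nth_equalityI)
  show "length (permQ n \<sigma> (permQ n (inv \<sigma>) q)) = length q" using q by (simp add: OmegaQ_def)
next
  fix l assume "l < length (permQ n \<sigma> (permQ n (inv \<sigma>) q))"
  then have l: "l < n" by simp
  have il: "inv \<sigma> l < n" using perm_lt[OF permutes_inv[OF s] l] .
  show "permQ n \<sigma> (permQ n (inv \<sigma>) q) ! l = q ! l"
    using l il by (simp add: permQ_nth permutes_inv_inv[OF s] permutes_inverses[OF s])
qed

lemma permQ_inv2:
  assumes s: "\<sigma> permutes {..<n}" and q: "q \<in> OmegaQ n"
  shows "permQ n (inv \<sigma>) (permQ n \<sigma> q) = q"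
  using permQ_inv[OF permutes_inv[OF s] q] by (simp add: permutes_inv_inv[OF s])

lemma permQ_swap:
  assumes s: "\<sigma> permutes {..<n}" and q: "q \<in> OmegaQ n" and ij: "i < n" "j < n"
  shows "permQ n \<sigma> (swapQ i j q) = permQ n (\<sigma> \<circ> Transposition.transpose i j) q"
proof (rule nth_equalityI)
  fix l assume "l < length (permQ n \<sigma> (swapQ i j q))"
  then have l: "l < n" by simp
  have il: "inv \<sigma> l < n" using perm_lt[OF permutes_inv[OF s] l] .
  have bs: "bij \<sigma>" using s permutes_bij by blast
  have inv_comp: "inv (\<sigma> \<circ> Transposition.transpose i j) = Transposition.transpose i j \<circ> inv \<sigma>"
    using o_inv_distrib[OF bs bij_transpose] by simp
  show "permQ n \<sigma> (swapQ i j q) ! l = permQ n (\<sigma> \<circ> Transposition.transpose i j) q ! l"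
    using l il q ij by (simp add: permQ_nth swapQ_nth inv_comp OmegaQ_def)
qed simp

lemma cnt_permQ:
  assumes s: "\<sigma> permutes {..<n}" and q: "q \<in> OmegaQ n"
  shows "cnt n (permQ n \<sigma> q) = cnt n q"
proof -
  have "{l. l < n \<and> permQ n \<sigma> q ! l} = \<sigma> ` {a. a < n \<and> q ! a}"
  proof (safe)
    fix l assume l: "l < n" "permQ n \<sigma> q ! l"
    have il: "inv \<sigma> l < n" using perm_lt[OF permutes_inv[OF s] l(1)] .
    show "l \<in> \<sigma> ` {a. a < n \<and> q ! a}"
      using l il by (intro image_eqI[of _ _ "inv \<sigma> l"]) (auto simp: permQ_nth permutes_inverses[OF s])
  next
    fix a assume a: "a < n" "q ! a"
    show "\<sigma> a < n" using perm_lt[OF s a(1)] .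
    show "permQ n \<sigma> q ! (\<sigma> a)" using a perm_lt[OF s a(1)] by (simp add: permQ_nth permutes_inverses[OF s])
  qed
  moreover have "inj_on \<sigma> {a. a < n \<and> q ! a}"
    using permutes_inj[OF s] by (auto simp: inj_on_def inj_def)
  ultimately show ?thesis unfolding cnt_def by (simp add: card_image)
qed

lemma cnt_swapQ:
  assumes q: "q \<in> OmegaQ n" and ij: "i < n" "j < n"
  shows "cnt n (swapQ i j q) = cnt n q"
proof -
  have "swapQ i j q = permQ n (Transposition.transpose i j) q"
  proof (rule nth_equalityI)
    fix l assume "l < length (swapQ i j q)"
    then have l: "l < n" using q by (simp add: OmegaQ_def)
    show "swapQ i j q ! l = permQ n (Transposition.transpose i j) q ! l"
      using l q ij by (simp add: permQ_nth swapQ_nth OmegaQ_def)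
  qed (use q in \<open>simp add: OmegaQ_def\<close>)
  then show ?thesis using cnt_permQ[OF permutes_swap_id q] ij by simp
qed

lemma fin_perms: "finite {\<sigma>. \<sigma> permutes {..<n::nat}}"
  by (rule finite_permutations) (rule finite_lessThan)

lemma card_perms: "card {\<sigma>. \<sigma> permutes {..<n::nat}} = fact n"
  using card_permutations[of "{..<n}" n] by simp

lemma symm_swap:
  assumes q: "q \<in> OmegaQ n" and ij: "i < n" "j < n"
  shows "symm n \<nu> (swapQ i j q) = symm n \<nu> q"
proof -
  let ?S = "{\<sigma>. \<sigma> permutes {..<n}}"
  let ?t = "Transposition.transpose i j"
  have tp: "?t permutes {..<n}" using ij by (simp add: permutes_swap_id)
  have "(\<Sum>\<sigma>\<in>?S. \<nu> (permQ n \<sigma> (swapQ i j q))) = (\<Sum>\<sigma>\<in>?S. \<nu> (permQ n (\<sigma> \<circ> ?t) q))"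
    by (rule sum.cong) (use q ij in \<open>auto simp: permQ_swap\<close>)
  also have "\<dots> = (\<Sum>\<sigma>\<in>?S. \<nu> (permQ n \<sigma> q))"
    by (rule sum.reindex_bij_witness[of _ "\<lambda>\<sigma>. \<sigma> \<circ> ?t" "\<lambda>\<sigma>. \<sigma> \<circ> ?t"])
       (auto simp: o_assoc[symmetric] permutes_compose[OF tp])
  finally show ?thesis using q by (simp add: symm_def)
qed

lemma symm_reindex:
  "(\<Sum>z\<in>OmegaQ n. symm n \<nu> z * g z)
     = (1 / fact n) * (\<Sum>\<sigma>\<in>{\<sigma>. \<sigma> permutes {..<n}}. \<Sum>x\<in>OmegaQ n. \<nu> x * g (permQ n (inv \<sigma>) x))"
proof -
  let ?S = "{\<sigma>. \<sigma> permutes {..<n}}"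
  have "(\<Sum>z\<in>OmegaQ n. symm n \<nu> z * g z) = (1 / fact n) * (\<Sum>z\<in>OmegaQ n. \<Sum>\<sigma>\<in>?S. \<nu> (permQ n \<sigma> z) * g z)"
    by (simp add: symm_def sum_distrib_left sum_distrib_right mult.assoc)
  also have "(\<Sum>z\<in>OmegaQ n. \<Sum>\<sigma>\<in>?S. \<nu> (permQ n \<sigma> z) * g z) = (\<Sum>\<sigma>\<in>?S. \<Sum>z\<in>OmegaQ n. \<nu> (permQ n \<sigma> z) * g z)"
    by (rule sum.swap)
  also have "\<dots> = (\<Sum>\<sigma>\<in>?S. \<Sum>x\<in>OmegaQ n. \<nu> x * g (permQ n (inv \<sigma>) x))"
  proof (rule sum.cong[OF refl])
    fix \<sigma> assume "\<sigma> \<in> ?S"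
    then have s: "\<sigma> permutes {..<n}" by simp
    show "(\<Sum>z\<in>OmegaQ n. \<nu> (permQ n \<sigma> z) * g z) = (\<Sum>x\<in>OmegaQ n. \<nu> x * g (permQ n (inv \<sigma>) x))"
      by (rule sum.reindex_bij_witness[of _ "permQ n (inv \<sigma>)" "permQ n \<sigma>"])
         (auto simp: permQ_inv[OF s] permQ_inv2[OF s])
  qed
  finally show ?thesis .
qed


lemma swapQ_invol: "q \<in> OmegaQ n \<Longrightarrow> i < n \<Longrightarrow> j < n \<Longrightarrow> swapQ i j (swapQ i j q) = q"
proof -
  assume q: "q \<in> OmegaQ n" and ij: "i < n" "j < n"
  show ?thesis
  proof (rule nth_equalityI)
    fix l assume "l < length (swapQ i j (swapQ i j q))"
    then have l: "l < n" using q by (simp add: OmegaQ_def)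
    have tl: "Transposition.transpose i j l < n" using l ij by (simp add: Transposition.transpose_def)
    show "swapQ i j (swapQ i j q) ! l = q ! l"
      using q ij l tl by (simp add: OmegaQ_def swapQ_nth)
  qed simp
qed

lemma symm_Top:
  assumes n: "2 \<le> n"
  shows "(\<Sum>z\<in>OmegaQ n. symm n \<nu> z * Top n f z) = (\<Sum>z\<in>OmegaQ n. symm n \<nu> z * f z)"
proof -
  have inner: "(\<Sum>z\<in>OmegaQ n. symm n \<nu> z * f (swapQ i j z)) = (\<Sum>z\<in>OmegaQ n. symm n \<nu> z * f z)"
    if ij: "i < n" "j < n" for i j
  proof -
    have "(\<Sum>z\<in>OmegaQ n. symm n \<nu> z * f (swapQ i j z)) = (\<Sum>z\<in>OmegaQ n. symm n \<nu> (swapQ i j z) * f (swapQ i j z))"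
      by (rule sum.cong) (use ij in \<open>auto simp: symm_swap\<close>)
    also have "\<dots> = (\<Sum>z\<in>OmegaQ n. symm n \<nu> z * f z)"
      by (rule sum.reindex_bij_witness[of _ "swapQ i j" "swapQ i j"]) (use ij in \<open>auto simp: swapQ_invol\<close>)
    finally show ?thesis .
  qed
  have "(\<Sum>z\<in>OmegaQ n. symm n \<nu> z * Top n f z)
      = (\<Sum>z\<in>OmegaQ n. (\<Sum>i<n. \<Sum>j<n. symm n \<nu> z * f (swapQ i j z)) / real n ^ 2)"
    by (rule sum.cong) (auto simp: Top_eq[OF n] sum_distrib_left)
  also have "\<dots> = (\<Sum>i<n. \<Sum>j<n. \<Sum>z\<in>OmegaQ n. symm n \<nu> z * f (swapQ i j z)) / real n ^ 2"
  proof -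
    have "(\<Sum>z\<in>OmegaQ n. (\<Sum>i<n. \<Sum>j<n. symm n \<nu> z * f (swapQ i j z)) / real n ^ 2)
       = (\<Sum>z\<in>OmegaQ n. \<Sum>i<n. \<Sum>j<n. symm n \<nu> z * f (swapQ i j z)) / real n ^ 2"
      by (simp add: sum_divide_distrib)
    also have "(\<Sum>z\<in>OmegaQ n. \<Sum>i<n. \<Sum>j<n. symm n \<nu> z * f (swapQ i j z))
        = (\<Sum>i<n. \<Sum>z\<in>OmegaQ n. \<Sum>j<n. symm n \<nu> z * f (swapQ i j z))"
      by (rule sum.swap)
    also have "\<dots> = (\<Sum>i<n. \<Sum>j<n. \<Sum>z\<in>OmegaQ n. symm n \<nu> z * f (swapQ i j z))"
      by (rule sum.cong[OF refl]) (rule sum.swap)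
    finally show ?thesis .
  qed
  also have "\<dots> = (\<Sum>i<n. \<Sum>j<n. \<Sum>z\<in>OmegaQ n. symm n \<nu> z * f z) / real n ^ 2"
    by (simp add: inner)
  also have "\<dots> = (\<Sum>z\<in>OmegaQ n. symm n \<nu> z * f z)"
    using n by (simp add: power2_eq_square)
  finally show ?thesis .
qed

lemma symm_It:
  assumes n: "2 \<le> n"
  shows "(\<Sum>z\<in>OmegaQ n. symm n \<nu> z * (Top n ^^ t) f z) = (\<Sum>z\<in>OmegaQ n. symm n \<nu> z * f z)"
proof (induction t arbitrary: f)
  case 0 then show ?case by simp
next
  case (Suc t)
  have "(\<Sum>z\<in>OmegaQ n. symm n \<nu> z * (Top n ^^ Suc t) f z) = (\<Sum>z\<in>OmegaQ n. symm n \<nu> z * (Top n ^^ t) (Top n f) z)"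
    by (simp add: funpow_Suc_right del: funpow.simps)
  also have "\<dots> = (\<Sum>z\<in>OmegaQ n. symm n \<nu> z * Top n f z)" by (rule Suc.IH)
  finally show ?case using symm_Top[OF n] by simp
qed

definition dd :: "nat \<Rightarrow> bool list \<Rightarrow> bool list \<Rightarrow> real" where
  "dd n x y = (\<Sum>a<n. if x ! a \<and> \<not> y ! a then 1 else 0)"

definition Lip :: "nat \<Rightarrow> real \<Rightarrow> (bool list \<Rightarrow> real) \<Rightarrow> bool" where
  "Lip n L f \<longleftrightarrow> (\<forall>x\<in>OmegaQ n. \<forall>y\<in>OmegaQ n. cnt n x = cnt n y \<longrightarrow> \<bar>f x - f y\<bar> \<le> L * dd n x y)"

lemma dd_le: "dd n x y \<le> real n"
proof -
  have "dd n x y \<le> (\<Sum>a<n. 1)" unfolding dd_def by (rule sum_mono) auto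
  then show ?thesis by simp
qed

lemma dd_nonneg: "0 \<le> dd n x y"
  unfolding dd_def by (rule sum_nonneg) auto

lemma dd_ge1:
  assumes x: "x \<in> OmegaQ n" and y: "y \<in> OmegaQ n" and c: "cnt n x = cnt n y" and ne: "x \<noteq> y"
  shows "1 \<le> dd n x y"
proof (cases "\<exists>a<n. x ! a \<and> \<not> y ! a")
  case True
  then obtain a where a: "a < n" "x ! a" "\<not> y ! a" by blast
  have "(if x ! a \<and> \<not> y ! a then 1 else 0::real) \<le> dd n x y"
    unfolding dd_def by (rule member_le_sum) (use a in auto)
  then show ?thesis using a by simp
next
  case False
  then have sub: "{a. a < n \<and> x ! a} \<subseteq> {a. a < n \<and> y ! a}" by auto
  have "{a. a < n \<and> x ! a} = {a. a < n \<and> y ! a}"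
    by (rule card_subset_eq) (use sub c in \<open>auto simp: cnt_def\<close>)
  then have "\<forall>a<n. x ! a = y ! a" by blast
  then have "x = y" using x y by (intro nth_equalityI) (auto simp: OmegaQ_def)
  with ne show ?thesis by simp
qed

lemma Lip_bounded:
  assumes "\<And>z. z \<in> OmegaQ n \<Longrightarrow> \<bar>s z\<bar> \<le> 1"
  shows "Lip n 2 s"
  unfolding Lip_def
proof (intro ballI impI)
  fix x y assume x: "x \<in> OmegaQ n" and y: "y \<in> OmegaQ n" and c: "cnt n x = cnt n y"
  show "\<bar>s x - s y\<bar> \<le> 2 * dd n x y"
  proof (cases "x = y")
    case True then show ?thesis using dd_nonneg[of n x y] by simp
  next
    case False
    have "\<bar>s x - s y\<bar> \<le> 2" using assms[OF x] assms[OF y] by linarith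
    also have "2 \<le> 2 * dd n x y" using dd_ge1[OF x y c False] by simp
    finally show ?thesis .
  qed
qed


lemma exists_invol:
  assumes x: "x \<in> OmegaQ n" and y: "y \<in> OmegaQ n" and c: "cnt n x = cnt n y"
  shows "\<exists>r. (\<forall>a<n. r a < n) \<and> (\<forall>a<n. r (r a) = a) \<and> (\<forall>a<n. y ! a = x ! r a)
            \<and> (\<forall>a<n. r a = a \<or> x ! a \<noteq> x ! r a)"
proof -
  define P0 where "P0 = {a. a < n \<and> x ! a \<and> \<not> y ! a}"
  define Q0 where "Q0 = {a. a < n \<and> \<not> x ! a \<and> y ! a}"
  define B where "B = {a. a < n \<and> x ! a \<and> y ! a}"
  have fin: "finite P0" "finite Q0" "finite B" unfolding P0_def Q0_def B_def by auto
  have "{a. a < n \<and> x ! a} = P0 \<union> B" "{a. a < n \<and> y ! a} = Q0 \<union> B"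
    unfolding P0_def Q0_def B_def by auto
  moreover have "P0 \<inter> B = {}" "Q0 \<inter> B = {}" unfolding P0_def Q0_def B_def by auto
  ultimately have "card P0 + card B = card Q0 + card B"
    using c fin unfolding cnt_def by (simp add: card_Un_disjoint)
  then have "card P0 = card Q0" by simp
  then obtain h where h: "bij_betw h P0 Q0" using finite_same_card_bij fin by blast
  have hinv: "bij_betw (inv_into P0 h) Q0 P0" using bij_betw_inv_into[OF h] .
  have disj: "P0 \<inter> Q0 = {}" unfolding P0_def Q0_def by auto
  define r where "r a = (if a \<in> P0 then h a else if a \<in> Q0 then inv_into P0 h a else a)" for a
  have hP: "a \<in> P0 \<Longrightarrow> h a \<in> Q0" for a using h by (auto simp: bij_betw_def)
  have hQ: "a \<in> Q0 \<Longrightarrow> inv_into P0 h a \<in> P0" for a using hinv by (auto simp: bij_betw_def)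
  have r1: "\<forall>a<n. r a < n"
    using hP hQ unfolding r_def by (auto simp: P0_def Q0_def)
  have r2: "\<forall>a<n. r (r a) = a"
  proof (intro allI impI)
    fix a assume "a < n"
    show "r (r a) = a"
    proof (cases "a \<in> P0")
      case True
      then have "h a \<in> Q0" "h a \<notin> P0" using hP disj by auto
      then show ?thesis using True h unfolding r_def by (simp add: bij_betw_def inv_into_f_f)
    next
      case False
      show ?thesis
      proof (cases "a \<in> Q0")
        case True
        then have "inv_into P0 h a \<in> P0" using hQ by auto
        moreover have "h (inv_into P0 h a) = a" using True h by (simp add: bij_betw_def f_inv_into_f)
        ultimately show ?thesis using True False unfolding r_def by simp
      qed (use False in \<open>simp add: r_def\<close>)
    qed
  qed
  have r3: "\<forall>a<n. y ! a = x ! r a"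
  proof (intro allI impI)
    fix a assume a: "a < n"
    show "y ! a = x ! r a"
    proof (cases "a \<in> P0")
      case True then show ?thesis using hP[OF True] unfolding r_def by (auto simp: P0_def Q0_def)
    next
      case False
      show ?thesis
      proof (cases "a \<in> Q0")
        case True then show ?thesis using hQ[OF True] False unfolding r_def by (auto simp: P0_def Q0_def)
      next
        case F2: False
        then show ?thesis using False a unfolding r_def by (auto simp: P0_def Q0_def)
      qed
    qed
  qed
  have r4: "\<forall>a<n. r a = a \<or> x ! a \<noteq> x ! r a"
  proof (intro allI impI)
    fix a assume a: "a < n"
    show "r a = a \<or> x ! a \<noteq> x ! r a"
    proof (cases "a \<in> P0")
      case True then show ?thesis using hP[OF True] unfolding r_def by (auto simp: P0_def Q0_def)
    next
      case False
      show ?thesis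
      proof (cases "a \<in> Q0")
        case True then show ?thesis using hQ[OF True] False unfolding r_def by (auto simp: P0_def Q0_def)
      next
        case F2: False
        then show ?thesis using False a unfolding r_def by auto
      qed
    qed
  qed
  show ?thesis using r1 r2 r3 r4 by blast
qed

lemma invol_transpose:
  assumes r1: "\<forall>a<n. r a < n" and r2: "\<forall>a<n. r (r a) = a" and ij: "i < n" "j < n" and a: "a < n"
  shows "r (Transposition.transpose (r i) (r j) a) = Transposition.transpose i j (r a)"
proof -
  have rr: "r (r i) = i" "r (r j) = j" "r (r a) = a" using r2 ij a by auto
  show ?thesis
  proof (cases "a = r i")
    case True then show ?thesis using rr by (simp add: Transposition.transpose_def)
  next
    case F1: False
    show ?thesis
    proof (cases "a = r j")
      case True then show ?thesis using rr F1 by (auto simp: Transposition.transpose_def)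
    next
      case False
      have "r a \<noteq> i" using F1 rr by metis
      moreover have "r a \<noteq> j" using False rr by metis
      ultimately show ?thesis using F1 False by (simp add: Transposition.transpose_def)
    qed
  qed
qed

lemma sum_invol_reindex:
  fixes g :: "nat \<Rightarrow> real"
  assumes r1: "\<forall>a<n. r a < n" and r2: "\<forall>a<n. r (r a) = a"
  shows "(\<Sum>a<n. g (r a)) = (\<Sum>a<n. g a)"
  by (rule sum.reindex_bij_witness[of _ r r]) (use r1 r2 in auto)


lemma per_a:
  fixes x :: "bool list"
  assumes n: "2 \<le> n" and a: "a < n" and b: "b < n" and hb: "b = a \<or> x ! a \<noteq> x ! b"
  defines "F \<equiv> \<lambda>c e. (if x ! c \<and> \<not> x ! e then 1 else 0::real)"
  shows "(\<Sum>i<n. \<Sum>j<n. F (Transposition.transpose i j a) (Transposition.transpose i j b))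
       = (real n ^ 2 - 2 * real n + 2) * F a b + 2 * F b a"
proof (cases "b = a")
  case True
  then show ?thesis by (simp add: F_def)
next
  case False
  then have ab: "a < n" "b < n" "a \<noteq> b" using a b by auto
  have xab: "x ! a \<noteq> x ! b" using hb False by auto
  have cR: "real (card ({..<n}-{a,b})) = real n - 2" using card_R[OF ab] ab by auto
  have TP: "(\<Sum>i<n. \<Sum>j<n. F (Transposition.transpose i j a) (Transposition.transpose i j b))
     = ((real n - 2)^2 + 2) * F a b + 2 * F b a + 2 * (\<Sum>c\<in>{..<n}-{a,b}. F c b + F a c)"
    by (rule two_point[OF ab])
  show ?thesis
  proof (cases "x ! a")
    case True
    then have xb: "\<not> x ! b" using xab by simp
    have "(\<Sum>c\<in>{..<n}-{a,b}. F c b + F a c) = (\<Sum>c\<in>{..<n}-{a,b}. 1)"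
      by (rule sum.cong) (use True xb in \<open>auto simp: F_def\<close>)
    then have "(\<Sum>c\<in>{..<n}-{a,b}. F c b + F a c) = real n - 2" using cR by simp
    then show ?thesis using TP True xb by (simp add: F_def power2_eq_square algebra_simps)
  next
    case False
    then have xb: "x ! b" using xab by simp
    have "(\<Sum>c\<in>{..<n}-{a,b}. F c b + F a c) = 0"
      by (rule sum.neutral) (use False xb in \<open>auto simp: F_def\<close>)
    then show ?thesis using TP False xb by (simp add: F_def)
  qed
qed

lemma coupling_sum:
  assumes n: "2 \<le> n" and x: "x \<in> OmegaQ n" and y: "y \<in> OmegaQ n"
    and r1: "\<forall>a<n. r a < n" and r2: "\<forall>a<n. r (r a) = a" and r3: "\<forall>a<n. y ! a = x ! r a"
    and r4: "\<forall>a<n. r a = a \<or> x ! a \<noteq> x ! r a"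
  shows "(\<Sum>i<n. \<Sum>j<n. dd n (swapQ i j x) (swapQ (r i) (r j) y)) = (real n ^ 2 - 2 * real n + 4) * dd n x y"
proof -
  define F where "F \<equiv> \<lambda>c e. (if x ! c \<and> \<not> x ! e then 1 else 0::real)"
  have lx: "length x = n" "length y = n" using x y by (auto simp: OmegaQ_def)
  have s1: "dd n (swapQ i j x) (swapQ (r i) (r j) y)
      = (\<Sum>a<n. F (Transposition.transpose i j a) (Transposition.transpose i j (r a)))"
    if ij: "i < n" "j < n" for i j
    unfolding dd_def
  proof (rule sum.cong[OF refl])
    fix a assume "a \<in> {..<n}"
    then have a: "a < n" by simp
    have ta: "Transposition.transpose (r i) (r j) a < n" using a ij r1 by (simp add: Transposition.transpose_def)
    have e1: "swapQ i j x ! a = x ! Transposition.transpose i j a" using swapQ_nth[of i x j a] ij a lx by simp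
    have "swapQ (r i) (r j) y ! a = y ! Transposition.transpose (r i) (r j) a"
      using swapQ_nth[of "r i" y "r j" a] ij a lx r1 by simp
    also have "\<dots> = x ! r (Transposition.transpose (r i) (r j) a)" using r3 ta by simp
    also have "\<dots> = x ! Transposition.transpose i j (r a)" using invol_transpose[OF r1 r2 ij a] by simp
    finally show "(if swapQ i j x ! a \<and> \<not> swapQ (r i) (r j) y ! a then 1 else 0) =
         F (Transposition.transpose i j a) (Transposition.transpose i j (r a))"
      using e1 by (simp add: F_def)
  qed
  have "(\<Sum>i<n. \<Sum>j<n. dd n (swapQ i j x) (swapQ (r i) (r j) y))
      = (\<Sum>i<n. \<Sum>j<n. \<Sum>a<n. F (Transposition.transpose i j a) (Transposition.transpose i j (r a)))"
    by (simp add: s1)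
  also have "\<dots> = (\<Sum>a<n. \<Sum>i<n. \<Sum>j<n. F (Transposition.transpose i j a) (Transposition.transpose i j (r a)))"
  proof -
    have "(\<Sum>i<n. \<Sum>j<n. \<Sum>a<n. F (Transposition.transpose i j a) (Transposition.transpose i j (r a)))
        = (\<Sum>i<n. \<Sum>a<n. \<Sum>j<n. F (Transposition.transpose i j a) (Transposition.transpose i j (r a)))"
      by (rule sum.cong[OF refl]) (rule sum.swap)
    also have "\<dots> = (\<Sum>a<n. \<Sum>i<n. \<Sum>j<n. F (Transposition.transpose i j a) (Transposition.transpose i j (r a)))"
      by (rule sum.swap)
    finally show ?thesis .
  qed
  also have "\<dots> = (\<Sum>a<n. (real n ^ 2 - 2 * real n + 2) * F a (r a) + 2 * F (r a) a)"
  proof (rule sum.cong[OF refl])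
    fix a assume "a \<in> {..<n}"
    then have a: "a < n" by simp
    have "r a = a \<or> x ! a \<noteq> x ! r a" using r4 a by simp
    then show "(\<Sum>i<n. \<Sum>j<n. F (Transposition.transpose i j a) (Transposition.transpose i j (r a)))
        = (real n ^ 2 - 2 * real n + 2) * F a (r a) + 2 * F (r a) a"
      using per_a[OF n a, of "r a" x] r1 a unfolding F_def by auto
  qed
  also have "\<dots> = (real n ^ 2 - 2 * real n + 2) * (\<Sum>a<n. F a (r a)) + 2 * (\<Sum>a<n. F (r a) a)"
    by (simp add: sum.distrib sum_distrib_left)
  also have "(\<Sum>a<n. F (r a) a) = (\<Sum>a<n. F a (r a))"
  proof -
    have "(\<Sum>a<n. F (r a) a) = (\<Sum>a<n. (\<lambda>b. F b (r b)) (r a))"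
      by (rule sum.cong) (use r2 in auto)
    also have "\<dots> = (\<Sum>a<n. F a (r a))" by (rule sum_invol_reindex[OF r1 r2])
    finally show ?thesis .
  qed
  also have "(\<Sum>a<n. F a (r a)) = dd n x y"
    unfolding dd_def F_def by (rule sum.cong) (use r3 in auto)
  finally show ?thesis by (simp add: algebra_simps)
qed

definition rho :: "nat \<Rightarrow> real" where
  "rho n = (real n ^ 2 - 2 * real n + 4) / real n ^ 2"

lemma rho_nonneg: "0 \<le> rho n"
proof -
  have "0 \<le> (real n - 1)^2 + 3" by simp
  then have "0 \<le> real n ^ 2 - 2 * real n + 4" by (simp add: power2_eq_square algebra_simps)
  then show ?thesis by (simp add: rho_def)
qed


lemma sum2_invol_reindex:
  fixes g :: "nat \<Rightarrow> nat \<Rightarrow> real"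
  assumes r1: "\<forall>a<n. r a < n" and r2: "\<forall>a<n. r (r a) = a"
  shows "(\<Sum>i<n. \<Sum>j<n. g (r i) (r j)) = (\<Sum>i<n. \<Sum>j<n. g i j)"
proof -
  have "(\<Sum>i<n. \<Sum>j<n. g (r i) (r j)) = (\<Sum>i<n. \<Sum>j<n. g (r i) j)"
    by (rule sum.cong[OF refl]) (rule sum_invol_reindex[OF r1 r2])
  also have "\<dots> = (\<Sum>i<n. \<Sum>j<n. g i j)"
    by (rule sum_invol_reindex[OF r1 r2, of "\<lambda>i. \<Sum>j<n. g i j"])
  finally show ?thesis .
qed

lemma LipT:
  assumes n: "2 \<le> n" and L: "0 \<le> L" and lf: "Lip n L f"
  shows "Lip n (rho n * L) (Top n f)"
  unfolding Lip_def
proof (intro ballI impI)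
  fix x y assume x: "x \<in> OmegaQ n" and y: "y \<in> OmegaQ n" and c: "cnt n x = cnt n y"
  obtain r where r1: "\<forall>a<n. r a < n" and r2: "\<forall>a<n. r (r a) = a" and r3: "\<forall>a<n. y ! a = x ! r a"
    and r4: "\<forall>a<n. r a = a \<or> x ! a \<noteq> x ! r a"
    using exists_invol[OF x y c] by blast
  have nn: "0 < real n ^ 2" using n by simp
  have Ty: "Top n f y = (\<Sum>i<n. \<Sum>j<n. f (swapQ (r i) (r j) y)) / real n ^ 2"
    using Top_eq[OF n y] sum2_invol_reindex[OF r1 r2, of "\<lambda>i j. f (swapQ i j y)"] by simp
  have each: "\<bar>f (swapQ i j x) - f (swapQ (r i) (r j) y)\<bar> \<le> L * dd n (swapQ i j x) (swapQ (r i) (r j) y)"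
    if ij: "i < n" "j < n" for i j
  proof -
    have "r i < n" "r j < n" using r1 ij by auto
    then have "cnt n (swapQ i j x) = cnt n (swapQ (r i) (r j) y)"
      using cnt_swapQ[OF x ij] cnt_swapQ[OF y] c by simp
    then show ?thesis using lf x y unfolding Lip_def by simp
  qed
  have "\<bar>Top n f x - Top n f y\<bar> = \<bar>\<Sum>i<n. \<Sum>j<n. f (swapQ i j x) - f (swapQ (r i) (r j) y)\<bar> / real n ^ 2"
    using Top_eq[OF n x] Ty by (simp add: sum_subtractf diff_divide_distrib[symmetric])
  also have "\<dots> \<le> (\<Sum>i<n. \<Sum>j<n. \<bar>f (swapQ i j x) - f (swapQ (r i) (r j) y)\<bar>) / real n ^ 2"
  proof (rule divide_right_mono)
    show "\<bar>\<Sum>i<n. \<Sum>j<n. f (swapQ i j x) - f (swapQ (r i) (r j) y)\<bar>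
        \<le> (\<Sum>i<n. \<Sum>j<n. \<bar>f (swapQ i j x) - f (swapQ (r i) (r j) y)\<bar>)"
      by (rule order_trans[OF sum_abs]) (intro sum_mono sum_abs)
  qed simp
  also have "\<dots> \<le> (\<Sum>i<n. \<Sum>j<n. L * dd n (swapQ i j x) (swapQ (r i) (r j) y)) / real n ^ 2"
    by (intro divide_right_mono sum_mono) (auto intro: each)
  also have "\<dots> = L * (real n ^ 2 - 2 * real n + 4) * dd n x y / real n ^ 2"
    using coupling_sum[OF n x y r1 r2 r3 r4] by (simp add: sum_distrib_left[symmetric])
  also have "\<dots> = rho n * L * dd n x y"
    by (simp add: rho_def)
  finally show "\<bar>Top n f x - Top n f y\<bar> \<le> rho n * L * dd n x y" .
qed

lemma Lip_It:
  assumes n: "2 \<le> n" and L: "0 \<le> L" and lf: "Lip n L f"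
  shows "Lip n (rho n ^ t * L) ((Top n ^^ t) f)"
proof (induction t)
  case 0 then show ?case using lf by simp
next
  case (Suc t)
  have "0 \<le> rho n ^ t * L" using L rho_nonneg by simp
  from LipT[OF n this Suc] show ?case by (simp add: mult.assoc)
qed

lemma Lip_mono: "Lip n L f \<Longrightarrow> L \<le> L' \<Longrightarrow> Lip n L' f"
  unfolding Lip_def
  by (meson dd_nonneg mult_right_mono order_trans)

lemma list2_cases:
  assumes "x \<in> OmegaQ 2" and "y \<in> OmegaQ 2" and "cnt 2 x = cnt 2 y"
  shows "y = x \<or> y = swapQ 0 1 x"
proof -
  obtain a b where x: "x = [a, b]" using assms(1) unfolding OmegaQ_def
    by (auto simp: length_Suc_conv numeral_2_eq_2)
  obtain c d where y: "y = [c, d]" using assms(2) unfolding OmegaQ_def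
    by (auto simp: length_Suc_conv numeral_2_eq_2)
  have e: "{k. k < (2::nat) \<and> [a,b] ! k} = (if a then {0} else {}) \<union> (if b then {1} else {})" for a b
  proof (rule set_eqI, rule iffI)
    fix k assume "k \<in> {k. k < (2::nat) \<and> [a,b] ! k}"
    then have "k = 0 \<and> a \<or> k = 1 \<and> b" by (auto simp: less_2_cases_iff)
    then show "k \<in> (if a then {0} else {}) \<union> (if b then {1} else {})" by auto
  qed (auto split: if_splits)
  have "cnt 2 [a, b] = cnt 2 [c, d]" using assms(3) x y by simp
  then have "(if a then 1 else 0) + (if b then 1 else (0::nat)) = (if c then 1 else 0) + (if d then 1 else 0)"
    unfolding cnt_def e by (auto split: if_splits)
  then show ?thesis unfolding x y swapQ_def by (cases a; cases b; cases c; cases d) auto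
qed

lemma Lip0_n2:
  "Lip 2 0 (Top 2 f)"
  unfolding Lip_def
proof (intro ballI impI)
  fix x y assume x: "x \<in> OmegaQ 2" and y: "y \<in> OmegaQ 2" and c: "cnt 2 x = cnt 2 y"
  have T: "Top 2 f z = (2 * f z + f (swapQ 0 1 z) + f (swapQ 1 0 z)) / 4" if z: "z \<in> OmegaQ 2" for z
    using Top_eq[of 2 z f] z by (simp add: numeral_2_eq_2 lessThan_Suc)
  have s10: "swapQ 1 0 z = swapQ 0 1 z" if "z \<in> OmegaQ 2" for z
    using that unfolding swapQ_def OmegaQ_def by (auto simp: list_update_swap)
  have "Top 2 f (swapQ 0 1 x) = Top 2 f x"
    using T[of x] T[of "swapQ 0 1 x"] x s10[of x] s10[of "swapQ 0 1 x"] swapQ_invol[OF x, of 0 1]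
    by simp
  then show "\<bar>Top 2 f x - Top 2 f y\<bar> \<le> 0 * dd 2 x y"
    using list2_cases[OF x y c] by auto
qed


lemma diff_bound:
  assumes n: "2 \<le> n" and nu: "is_dist n \<nu>" and L: "0 \<le> L"
    and lip: "Lip n L ((Top n ^^ t) f)"
  shows "\<bar>\<Sum>z\<in>OmegaQ n. (vecmat n \<nu> (matpow n (Tm n) t) z - symm n \<nu> z) * f z\<bar> \<le> L * real n"
proof -
  let ?S = "{\<sigma>. \<sigma> permutes {..<n}}"
  define g where "g = (Top n ^^ t) f"
  have nu0: "\<And>x. x \<in> OmegaQ n \<Longrightarrow> 0 \<le> \<nu> x" and nu1: "(\<Sum>x\<in>OmegaQ n. \<nu> x) = 1"
    using nu unfolding is_dist_def by auto
  have fn: "fact n \<noteq> (0::real)" by simp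
  have A: "(\<Sum>z\<in>OmegaQ n. vecmat n \<nu> (matpow n (Tm n) t) z * f z)
       = (1 / fact n) * (\<Sum>\<sigma>\<in>?S. \<Sum>x\<in>OmegaQ n. \<nu> x * g x)"
    using vecmat_EE[of n \<nu> t f] fn by (simp add: card_perms g_def)
  have B: "(\<Sum>z\<in>OmegaQ n. symm n \<nu> z * f z)
       = (1 / fact n) * (\<Sum>\<sigma>\<in>?S. \<Sum>x\<in>OmegaQ n. \<nu> x * g (permQ n (inv \<sigma>) x))"
    using symm_It[OF n, of \<nu> t f] symm_reindex[of n \<nu> g] by (simp add: g_def)
  have "(\<Sum>z\<in>OmegaQ n. (vecmat n \<nu> (matpow n (Tm n) t) z - symm n \<nu> z) * f z)
      = (1 / fact n) * (\<Sum>\<sigma>\<in>?S. \<Sum>x\<in>OmegaQ n. \<nu> x * (g x - g (permQ n (inv \<sigma>) x)))"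
    unfolding left_diff_distrib sum_subtractf A B
    by (simp add: right_diff_distrib sum_subtractf)
  also have "\<bar>\<dots>\<bar> \<le> (1 / fact n) * (\<Sum>\<sigma>\<in>?S. \<Sum>x\<in>OmegaQ n. \<nu> x * (L * real n))"
  proof -
    have "\<bar>\<Sum>\<sigma>\<in>?S. \<Sum>x\<in>OmegaQ n. \<nu> x * (g x - g (permQ n (inv \<sigma>) x))\<bar>
        \<le> (\<Sum>\<sigma>\<in>?S. \<Sum>x\<in>OmegaQ n. \<bar>\<nu> x * (g x - g (permQ n (inv \<sigma>) x))\<bar>)"
      by (rule order_trans[OF sum_abs]) (intro sum_mono sum_abs)
    also have "\<dots> \<le> (\<Sum>\<sigma>\<in>?S. \<Sum>x\<in>OmegaQ n. \<nu> x * (L * real n))"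
    proof (intro sum_mono)
      fix \<sigma> x assume s: "\<sigma> \<in> ?S" and x: "x \<in> OmegaQ n"
      have si: "inv \<sigma> permutes {..<n}" using s permutes_inv by auto
      have "\<bar>g x - g (permQ n (inv \<sigma>) x)\<bar> \<le> L * dd n x (permQ n (inv \<sigma>) x)"
        using lip x cnt_permQ[OF si x] unfolding Lip_def g_def by simp
      also have "\<dots> \<le> L * real n" using L dd_le by (simp add: mult_left_mono)
      finally show "\<bar>\<nu> x * (g x - g (permQ n (inv \<sigma>) x))\<bar> \<le> \<nu> x * (L * real n)"
        using nu0[OF x] by (simp add: abs_mult mult_left_mono)
    qed
    finally have X: "\<bar>\<Sum>\<sigma>\<in>?S. \<Sum>x\<in>OmegaQ n. \<nu> x * (g x - g (permQ n (inv \<sigma>) x))\<bar>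
        \<le> (\<Sum>\<sigma>\<in>?S. \<Sum>x\<in>OmegaQ n. \<nu> x * (L * real n))" .
    have "\<bar>1 / fact n :: real\<bar> = 1 / fact n" by simp
    moreover have "(1 / fact n :: real) * \<bar>\<Sum>\<sigma>\<in>?S. \<Sum>x\<in>OmegaQ n. \<nu> x * (g x - g (permQ n (inv \<sigma>) x))\<bar>
        \<le> 1 / fact n * (\<Sum>\<sigma>\<in>?S. \<Sum>x\<in>OmegaQ n. \<nu> x * (L * real n))"
      by (rule mult_left_mono[OF X]) simp
    ultimately show ?thesis unfolding abs_mult by simp
  qed
  also have "\<dots> = L * real n"
    using fn by (simp add: sum_distrib_right[symmetric] nu1 card_perms)
  finally show ?thesis .
qed

abbreviation mu where "mu n \<nu> t \<equiv> vecmat n \<nu> (matpow n (Tm n) t)"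

lemma tv_from_bound:
  fixes \<mu> \<pi> :: "bool list \<Rightarrow> real"
  assumes K: "\<And>s. (\<And>z. z \<in> OmegaQ n \<Longrightarrow> \<bar>s z\<bar> \<le> 1) \<Longrightarrow>
      \<bar>\<Sum>z\<in>OmegaQ n. (\<mu> z - \<pi> z) * s z\<bar> \<le> K"
  shows "tv n \<mu> \<pi> \<le> K / 2"
proof -
  define s where "s z = sgn (\<mu> z - \<pi> z)" for z
  have "(\<Sum>q\<in>OmegaQ n. \<bar>\<mu> q - \<pi> q\<bar>) = (\<Sum>z\<in>OmegaQ n. (\<mu> z - \<pi> z) * s z)"
    by (rule sum.cong) (auto simp: s_def abs_sgn mult.commute)
  also have "\<dots> \<le> \<bar>\<Sum>z\<in>OmegaQ n. (\<mu> z - \<pi> z) * s z\<bar>" by simp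
  also have "\<dots> \<le> K" by (rule K) (auto simp: s_def abs_sgn_eq)
  finally show ?thesis by (simp add: tv_def)
qed

lemma tv_upper:
  assumes n: "2 \<le> n" and nu: "is_dist n \<nu>"
  shows "tv n (mu n \<nu> t) (symm n \<nu>) \<le> rho n ^ t * real n"
proof -
  have "tv n (mu n \<nu> t) (symm n \<nu>) \<le> (rho n ^ t * 2 * real n) / 2"
  proof (rule tv_from_bound)
    fix s :: "bool list \<Rightarrow> real" assume s: "\<And>z. z \<in> OmegaQ n \<Longrightarrow> \<bar>s z\<bar> \<le> 1"
    have "Lip n (rho n ^ t * 2) ((Top n ^^ t) s)"
      by (rule Lip_It[OF n _ Lip_bounded[OF s]]) simp
    from diff_bound[OF n nu _ this] rho_nonneg
    show "\<bar>\<Sum>z\<in>OmegaQ n. (mu n \<nu> t z - symm n \<nu> z) * s z\<bar> \<le> rho n ^ t * 2 * real n" by simp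
  qed
  then show ?thesis by simp
qed

lemma tv_n2:
  assumes nu: "is_dist 2 \<nu>"
  shows "tv 2 (mu 2 \<nu> (Suc t)) (symm 2 \<nu>) \<le> 0"
proof -
  have "tv 2 (mu 2 \<nu> (Suc t)) (symm 2 \<nu>) \<le> 0 / 2"
  proof (rule tv_from_bound)
    fix s :: "bool list \<Rightarrow> real" assume s: "\<And>z. z \<in> OmegaQ 2 \<Longrightarrow> \<bar>s z\<bar> \<le> 1"
    have "Lip 2 (rho 2 ^ t * 0) ((Top 2 ^^ t) (Top 2 s))"
      by (rule Lip_It[OF _ _ Lip0_n2]) simp_all
    then have "Lip 2 0 ((Top 2 ^^ Suc t) s)" by (simp add: funpow_Suc_right del: funpow.simps)
    from diff_bound[OF _ nu _ this]
    show "\<bar>\<Sum>z\<in>OmegaQ 2. (mu 2 \<nu> (Suc t) z - symm 2 \<nu> z) * s z\<bar> \<le> 0" by simp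
  qed
  then show ?thesis by simp
qed

lemma point_from_tv:
  fixes \<mu> \<pi> :: "bool list \<Rightarrow> real"
  assumes q: "q \<in> OmegaQ n"
  shows "\<bar>\<mu> q - \<pi> q\<bar> \<le> 2 * tv n \<mu> \<pi>"
proof -
  have "\<bar>\<mu> q - \<pi> q\<bar> \<le> (\<Sum>q\<in>OmegaQ n. \<bar>\<mu> q - \<pi> q\<bar>)"
    by (rule member_le_sum) (use q in auto)
  then show ?thesis by (simp add: tv_def)
qed


lemma rho_lt1: "3 \<le> n \<Longrightarrow> rho n < 1"
  by (simp add: rho_def power2_eq_square field_simps)

lemma part1:
  assumes n: "2 \<le> n" and nu: "is_dist n \<nu>" and q: "q \<in> OmegaQ n"
  shows "(\<lambda>t. vecmat n \<nu> (matpow n (Tm n) t) q) \<longlonglongrightarrow> symm n \<nu> q"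
proof -
  have "(\<lambda>t. mu n \<nu> t q - symm n \<nu> q) \<longlonglongrightarrow> 0"
  proof (cases "n = 2")
    case True
    show ?thesis
    proof (rule Lim_null_comparison[where g = "\<lambda>t. 0"])
      show "\<forall>\<^sub>F t in sequentially. norm (mu n \<nu> t q - symm n \<nu> q) \<le> 0"
        unfolding eventually_sequentially
      proof (intro exI allI impI)
        fix t :: nat assume "1 \<le> t"
        then obtain s where t: "t = Suc s" by (cases t) auto
        have "\<bar>mu 2 \<nu> t q - symm 2 \<nu> q\<bar> \<le> 2 * tv 2 (mu 2 \<nu> t) (symm 2 \<nu>)"
          using point_from_tv q True by blast
        also have "\<dots> \<le> 0" using tv_n2[of \<nu> s] nu True t by simp
        finally show "norm (mu n \<nu> t q - symm n \<nu> q) \<le> 0" using True by simp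
      qed
    qed simp
  next
    case False
    then have n3: "3 \<le> n" using n by simp
    show ?thesis
    proof (rule Lim_null_comparison[where g = "\<lambda>t. 2 * (rho n ^ t * real n)"])
      show "\<forall>\<^sub>F t in sequentially. norm (mu n \<nu> t q - symm n \<nu> q) \<le> 2 * (rho n ^ t * real n)"
      proof (intro always_eventually allI)
        fix t
        have "\<bar>mu n \<nu> t q - symm n \<nu> q\<bar> \<le> 2 * tv n (mu n \<nu> t) (symm n \<nu>)" by (rule point_from_tv[OF q])
        also have "\<dots> \<le> 2 * (rho n ^ t * real n)" using tv_upper[OF n nu, of t] by simp
        finally show "norm (mu n \<nu> t q - symm n \<nu> q) \<le> 2 * (rho n ^ t * real n)" by simp
      qed
      have "(\<lambda>t. rho n ^ t) \<longlonglongrightarrow> 0"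
        by (rule LIMSEQ_power_zero) (use rho_lt1[OF n3] rho_nonneg in simp)
      then show "(\<lambda>t. 2 * (rho n ^ t * real n)) \<longlonglongrightarrow> 0"
        by (intro tendsto_mult_right_zero tendsto_mult_left_zero)
    qed
  qed
  then have "(\<lambda>t. (mu n \<nu> t q - symm n \<nu> q) + symm n \<nu> q) \<longlonglongrightarrow> 0 + symm n \<nu> q"
    by (intro tendsto_add) simp_all
  then show ?thesis by simp
qed


definition gq :: "bool list \<Rightarrow> nat \<Rightarrow> real" where
  "gq q a = (if q ! a then 1 else 0)"

definition Sm :: "nat \<Rightarrow> bool list \<Rightarrow> real" where
  "Sm n q = (\<Sum>a<n. gq q a)"

definition Yf :: "nat \<Rightarrow> nat \<Rightarrow> bool list \<Rightarrow> real" where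
  "Yf n k q = (\<Sum>a<k. gq q a) - real k * Sm n q / real n"

lemma Top_sum: "Top n (\<lambda>q. \<Sum>a\<in>A. F a q) q = (\<Sum>a\<in>A. Top n (F a) q)"
  unfolding Top_def by (simp add: sum_distrib_left) (rule sum.swap)

lemma Top_scale: "Top n (\<lambda>q. c * f q) q = c * Top n f q"
  using Top_lin[of n c f 0 f q] by simp

lemma Top_g:
  assumes n: "2 \<le> n" and q: "q \<in> OmegaQ n" and a: "a < n"
  shows "Top n (\<lambda>q. gq q a) q = (1 - 2 / real n) * gq q a + 2 * Sm n q / real n ^ 2"
proof -
  have lq: "length q = n" using q by (simp add: OmegaQ_def)
  have "(\<Sum>i<n. \<Sum>j<n. gq (swapQ i j q) a) = (\<Sum>i<n. \<Sum>j<n. gq q (Transposition.transpose i j a))"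
    using a lq by (intro sum.cong refl) (simp add: gq_def swapQ_nth)
  also have "\<dots> = (real n ^ 2 - 2 * real n) * gq q a + 2 * Sm n q"
    unfolding Sm_def by (rule one_point[OF n a])
  finally have "(\<Sum>i<n. \<Sum>j<n. gq (swapQ i j q) a) = (real n ^ 2 - 2 * real n) * gq q a + 2 * Sm n q" .
  then show ?thesis using Top_eq[OF n q, of "\<lambda>q. gq q a"] n
    by (simp add: field_simps power2_eq_square)
qed

lemma Top_Sm:
  assumes n: "2 \<le> n" and q: "q \<in> OmegaQ n"
  shows "Top n (Sm n) q = Sm n q"
proof -
  have "Top n (Sm n) q = (\<Sum>a<n. Top n (\<lambda>q. gq q a) q)"
    unfolding Sm_def by (rule Top_sum)
  also have "\<dots> = (\<Sum>a<n. (1 - 2 / real n) * gq q a + 2 * Sm n q / real n ^ 2)"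
    by (rule sum.cong) (simp_all add: Top_g[OF n q])
  also have "\<dots> = (1 - 2 / real n) * Sm n q + 2 * Sm n q / real n"
    using n by (simp add: sum.distrib sum_distrib_left[symmetric] Sm_def power2_eq_square)
  also have "\<dots> = Sm n q" using n by (simp add: field_simps)
  finally show ?thesis .
qed

lemma Top_Y:
  assumes n: "2 \<le> n" and q: "q \<in> OmegaQ n" and k: "k \<le> n"
  shows "Top n (Yf n k) q = (1 - 2 / real n) * Yf n k q"
proof -
  have "Top n (Yf n k) q = Top n (\<lambda>q. 1 * (\<Sum>a<k. gq q a) + (- (real k / real n)) * Sm n q) q"
    unfolding Yf_def by (rule Top_cong) simp
  also have "\<dots> = 1 * Top n (\<lambda>q. \<Sum>a<k. gq q a) q + (- (real k / real n)) * Top n (Sm n) q"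
    by (rule Top_lin)
  also have "\<dots> = (\<Sum>a<k. Top n (\<lambda>q. gq q a) q) - (real k / real n) * Sm n q"
    by (simp add: Top_sum Top_Sm[OF n q])
  also have "(\<Sum>a<k. Top n (\<lambda>q. gq q a) q) = (\<Sum>a<k. (1 - 2 / real n) * gq q a + 2 * Sm n q / real n ^ 2)"
    by (rule sum.cong) (use k in \<open>simp_all add: Top_g[OF n q]\<close>)
  also have "\<dots> = (1 - 2 / real n) * (\<Sum>a<k. gq q a) + real k * 2 * Sm n q / real n ^ 2"
    by (simp add: sum.distrib sum_distrib_left[symmetric])
  finally have L: "Top n (Yf n k) q = (1 - 2 / real n) * (\<Sum>a<k. gq q a) + real k * 2 * Sm n q / real n ^ 2
      - (real k / real n) * Sm n q" .
  have R: "(1 - 2 / real n) * Yf n k q = (1 - 2 / real n) * (\<Sum>a<k. gq q a) + real k * 2 * Sm n q / real n ^ 2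
      - (real k / real n) * Sm n q"
    unfolding Yf_def using n by (simp add: field_simps power2_eq_square)
  show ?thesis using L R by simp
qed

lemma Y_swap:
  assumes q: "q \<in> OmegaQ n" and ij: "i < n" "j < n" and k: "k \<le> n"
  shows "\<bar>Yf n k (swapQ i j q) - Yf n k q\<bar> \<le> 1"
proof -
  have lq: "length q = n" using q by (simp add: OmegaQ_def)
  have Ssw: "Sm n (swapQ i j q) = Sm n q"
  proof -
    have "Sm n (swapQ i j q) = (\<Sum>a<n. gq q (Transposition.transpose i j a))"
      unfolding Sm_def using lq ij by (intro sum.cong refl) (simp add: gq_def swapQ_nth)
    also have "\<dots> = Sm n q" unfolding Sm_def
      by (rule sum_invol_reindex[of n "Transposition.transpose i j" "gq q"])
         (use ij in \<open>auto simp: Transposition.transpose_def\<close>)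
    finally show ?thesis .
  qed
  define D where "D a = gq q (Transposition.transpose i j a) - gq q a" for a
  have "Yf n k (swapQ i j q) - Yf n k q = (\<Sum>a<k. D a)"
  proof -
    have "(\<Sum>a<k. gq (swapQ i j q) a) = (\<Sum>a<k. gq q (Transposition.transpose i j a))"
      by (rule sum.cong) (use lq ij k in \<open>auto simp: gq_def swapQ_nth\<close>)
    then show ?thesis unfolding Yf_def Ssw D_def by (simp add: sum_subtractf)
  qed
  also have "(\<Sum>a<k. D a) = (\<Sum>a\<in>{..<k} \<inter> {i,j}. D a)"
    by (rule sum.mono_neutral_right) (auto simp: D_def)
  finally have eq: "Yf n k (swapQ i j q) - Yf n k q = (\<Sum>a\<in>{..<k} \<inter> {i,j}. D a)" .
  have Dij: "D i = gq q j - gq q i" "D j = gq q i - gq q j" by (auto simp: D_def)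
  have gb: "0 \<le> gq q a" "gq q a \<le> 1" for a by (auto simp: gq_def)
  show ?thesis
  proof (cases "i = j")
    case True then show ?thesis using eq by (simp add: D_def)
  next
    case ne: False
    consider "i < k" "j < k" | "i < k" "\<not> j < k" | "\<not> i < k" "j < k" | "\<not> i < k" "\<not> j < k" by blast
    then show ?thesis
    proof cases
      case 1
      then have "{..<k} \<inter> {i,j} = {i,j}" by auto
      then show ?thesis using eq ne Dij by simp
    next
      case 2
      then have "{..<k} \<inter> {i,j} = {i}" by auto
      then show ?thesis using eq Dij gb[of i] gb[of j] by simp
    next
      case 3
      then have "{..<k} \<inter> {i,j} = {j}" by auto
      then show ?thesis using eq Dij gb[of i] gb[of j] by simp
    next
      case 4
      then have "{..<k} \<inter> {i,j} = {}" by auto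
      then show ?thesis using eq by simp
    qed
  qed
qed


lemma Top_V:
  assumes n: "2 \<le> n" and q: "q \<in> OmegaQ n" and k: "k \<le> n"
  shows "Top n (\<lambda>z. (Yf n k z)^2) q \<le> (1 - 4 / real n) * (Yf n k q)^2 + 1"
proof -
  define Y where "Y = Yf n k"
  define y0 where "y0 = Y q"
  have each: "(Y (swapQ i j q))^2 \<le> (1 - y0^2) + 2 * y0 * Y (swapQ i j q)" if ij: "i < n" "j < n" for i j
  proof -
    have "\<bar>Y (swapQ i j q) - y0\<bar> \<le> 1" using Y_swap[OF q ij k] by (simp add: Y_def y0_def)
    then have "(Y (swapQ i j q) - y0)^2 \<le> 1" by (simp add: abs_square_le_1)
    then show ?thesis by (simp add: power2_eq_square algebra_simps)
  qed
  have TY: "(\<Sum>i<n. \<Sum>j<n. Y (swapQ i j q)) = real n ^ 2 * ((1 - 2 / real n) * y0)"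
    using Top_eq[OF n q, of Y] Top_Y[OF n q k] n by (simp add: Y_def y0_def field_simps)
  have "(\<Sum>i<n. \<Sum>j<n. (Y (swapQ i j q))^2) \<le> (\<Sum>i<n. \<Sum>j<n. (1 - y0^2) + 2 * y0 * Y (swapQ i j q))"
    by (intro sum_mono) (simp add: each)
  also have "\<dots> = real n ^ 2 * (1 - y0^2) + 2 * y0 * (\<Sum>i<n. \<Sum>j<n. Y (swapQ i j q))"
    by (simp add: sum.distrib sum_distrib_left power2_eq_square)
  also have "\<dots> = real n ^ 2 * ((1 - 4 / real n) * y0^2 + 1)"
    unfolding TY using n by (simp add: field_simps power2_eq_square)
  finally have "(\<Sum>i<n. \<Sum>j<n. (Y (swapQ i j q))^2) \<le> real n ^ 2 * ((1 - 4 / real n) * y0^2 + 1)" .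
  then have "(\<Sum>i<n. \<Sum>j<n. (Y (swapQ i j q))^2) / real n ^ 2 \<le> (1 - 4 / real n) * y0^2 + 1"
    using n by (simp add: divide_le_eq mult.commute)
  then show ?thesis using Top_eq[OF n q, of "\<lambda>z. (Y z)^2"] by (simp add: Y_def y0_def)
qed

lemma It_Y:
  assumes n: "2 \<le> n" and k: "k \<le> n"
  shows "q \<in> OmegaQ n \<Longrightarrow> (Top n ^^ t) (Yf n k) q = (1 - 2 / real n)^t * Yf n k q"
proof (induction t arbitrary: q)
  case 0 then show ?case by simp
next
  case (Suc t)
  have "(Top n ^^ Suc t) (Yf n k) q = Top n ((Top n ^^ t) (Yf n k)) q" by simp
  also have "\<dots> = Top n (\<lambda>z. (1 - 2 / real n)^t * Yf n k z) q"
    by (rule Top_cong) (simp add: Suc.IH)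
  also have "\<dots> = (1 - 2 / real n)^t * Top n (Yf n k) q" by (rule Top_scale)
  finally show ?case using Top_Y[OF n Suc.prems k] by simp
qed

lemma It_V:
  assumes n: "4 \<le> n" and k: "k \<le> n" and q: "q \<in> OmegaQ n"
  shows "(Top n ^^ t) (\<lambda>z. (Yf n k z)^2) q \<le> (1 - 4 / real n)^t * (Yf n k q)^2 + real n / 4"
proof (induction t)
  case 0 then show ?case using n by simp
next
  case (Suc t)
  define al where "al = 1 - 4 / real n"
  have al0: "0 \<le> al" using n by (simp add: al_def field_simps)
  have n2: "2 \<le> n" using n by simp
  have "(Top n ^^ Suc t) (\<lambda>z. (Yf n k z)^2) q = (Top n ^^ t) (Top n (\<lambda>z. (Yf n k z)^2)) q"
    by (simp add: funpow_Suc_right del: funpow.simps)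
  also have "\<dots> \<le> (Top n ^^ t) (\<lambda>z. al * (Yf n k z)^2 + 1 * 1) q"
    by (rule It_mono[OF n2 q]) (simp add: Top_V[OF n2 _ k] al_def)
  also have "\<dots> = al * (Top n ^^ t) (\<lambda>z. (Yf n k z)^2) q + 1 * (Top n ^^ t) (\<lambda>z. 1) q"
    by (rule It_lin[OF q])
  also have "\<dots> \<le> al * ((1 - 4 / real n)^t * (Yf n k q)^2 + real n / 4) + 1"
    using It_const[OF n2 q] Suc al0 by (simp add: mult_left_mono)
  also have "\<dots> = (1 - 4 / real n)^Suc t * (Yf n k q)^2 + real n / 4"
    using n by (simp add: al_def field_simps)
  finally show ?case .
qed

lemma symm_nonneg:
  assumes "\<And>x. x \<in> OmegaQ n \<Longrightarrow> 0 \<le> \<nu> x"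
  shows "0 \<le> symm n \<nu> z"
proof -
  have "0 \<le> (\<Sum>\<sigma>\<in>{\<sigma>. \<sigma> permutes {..<n}}. \<nu> (permQ n \<sigma> z))"
    by (rule sum_nonneg) (simp add: assms)
  then show ?thesis unfolding symm_def by simp
qed

lemma symm_total:
  "(\<Sum>z\<in>OmegaQ n. symm n \<nu> z) = (\<Sum>x\<in>OmegaQ n. \<nu> x)"
  using symm_reindex[of n \<nu> "\<lambda>_. 1"] by (simp add: card_perms)


definition x0 :: "nat \<Rightarrow> bool list" where
  "x0 n = replicate (n div 2) True @ replicate (n - n div 2) False"

definition del0 :: "nat \<Rightarrow> bool list \<Rightarrow> real" where
  "del0 n = (\<lambda>y. if y = x0 n then 1 else 0)"

lemma x0_in: "x0 n \<in> OmegaQ n"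
  by (simp add: x0_def OmegaQ_def)

lemma del0_dist: "is_dist n (del0 n)"
  unfolding is_dist_def del0_def using x0_in by auto

lemma tv_ge_sum:
  fixes \<mu> \<pi> h :: "bool list \<Rightarrow> real"
  assumes eq: "(\<Sum>z\<in>OmegaQ n. \<mu> z) = (\<Sum>z\<in>OmegaQ n. \<pi> z)"
    and h: "\<And>z. 0 \<le> h z" "\<And>z. h z \<le> 1"
  shows "(\<Sum>z\<in>OmegaQ n. (\<mu> z - \<pi> z) * h z) \<le> tv n \<mu> \<pi>"
proof -
  have "(\<Sum>z\<in>OmegaQ n. (\<mu> z - \<pi> z) * h z) = (\<Sum>z\<in>OmegaQ n. (\<mu> z - \<pi> z) * (h z - 1/2))"
    using eq by (simp add: algebra_simps sum.distrib sum_subtractf sum_divide_distrib[symmetric])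
  also have "\<dots> \<le> (\<Sum>z\<in>OmegaQ n. \<bar>\<mu> z - \<pi> z\<bar> * (1/2))"
  proof (rule sum_mono)
    fix z
    have "\<bar>h z - 1/2\<bar> \<le> 1/2" using h[of z] unfolding abs_le_iff by linarith
    then have "(\<mu> z - \<pi> z) * (h z - 1/2) \<le> \<bar>\<mu> z - \<pi> z\<bar> * \<bar>h z - 1/2\<bar>"
      by (metis abs_ge_self abs_mult)
    also have "\<dots> \<le> \<bar>\<mu> z - \<pi> z\<bar> * (1/2)" by (rule mult_left_mono) (use \<open>\<bar>h z - 1/2\<bar> \<le> 1/2\<close> in simp_all)
    finally show "(\<mu> z - \<pi> z) * (h z - 1/2) \<le> \<bar>\<mu> z - \<pi> z\<bar> * (1/2)" .
  qed
  also have "\<dots> = tv n \<mu> \<pi>" by (simp add: tv_def sum_distrib_right)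
  finally show ?thesis .
qed

lemma tv_ge_abs:
  fixes \<mu> \<pi> h :: "bool list \<Rightarrow> real"
  assumes h: "\<And>z. z \<in> OmegaQ n \<Longrightarrow> \<bar>h z\<bar> \<le> M"
  shows "\<bar>\<Sum>z\<in>OmegaQ n. (\<mu> z - \<pi> z) * h z\<bar> \<le> 2 * M * tv n \<mu> \<pi>"
proof -
  have "\<bar>\<Sum>z\<in>OmegaQ n. (\<mu> z - \<pi> z) * h z\<bar> \<le> (\<Sum>z\<in>OmegaQ n. \<bar>\<mu> z - \<pi> z\<bar> * M)"
    by (rule order_trans[OF sum_abs], rule sum_mono) (simp add: abs_mult h mult_left_mono)
  also have "\<dots> = 2 * M * tv n \<mu> \<pi>" by (simp add: tv_def sum_distrib_right[symmetric])
  finally show ?thesis .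
qed

context
  fixes n :: nat
  assumes n4: "4 \<le> n"
begin

abbreviation "kk \<equiv> n div 2"
abbreviation "Y \<equiv> Yf n (n div 2)"
abbreviation "PI \<equiv> symm n (del0 n)"

lemma n2: "2 \<le> n" using n4 by simp
lemma kle: "n div 2 \<le> n" by simp

lemma mu_sum: "(\<Sum>z\<in>OmegaQ n. mu n (del0 n) t z * f z) = (Top n ^^ t) f (x0 n)"
proof -
  have "(\<Sum>z\<in>OmegaQ n. mu n (del0 n) t z * f z) = (\<Sum>x\<in>OmegaQ n. del0 n x * (Top n ^^ t) f x)"
    by (rule vecmat_EE)
  also have "\<dots> = (\<Sum>x\<in>OmegaQ n. if x = x0 n then (Top n ^^ t) f (x0 n) else 0)"
    by (rule sum.cong) (auto simp: del0_def)
  also have "\<dots> = (Top n ^^ t) f (x0 n)" using x0_in[of n] by simp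
  finally show ?thesis .
qed

lemma PI_nonneg: "0 \<le> PI z"
  by (rule symm_nonneg) (simp add: del0_def)

lemma PI_total: "(\<Sum>z\<in>OmegaQ n. PI z) = 1"
  using symm_total[of n "del0 n"] del0_dist[of n] by (simp add: is_dist_def)

lemma mu_total: "(\<Sum>z\<in>OmegaQ n. mu n (del0 n) t z) = 1"
  using mu_sum[of t "\<lambda>_. 1"] It_const[OF n2 x0_in] by simp

lemma PI_Y: "(\<Sum>z\<in>OmegaQ n. PI z * Y z) = 0"
proof -
  have "(\<Sum>z\<in>OmegaQ n. PI z * Y z) = (\<Sum>z\<in>OmegaQ n. PI z * Top n Y z)"
    using symm_Top[OF n2, of "del0 n" Y] by simp
  also have "\<dots> = (1 - 2 / real n) * (\<Sum>z\<in>OmegaQ n. PI z * Y z)"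
    by (simp add: sum_distrib_left Top_Y[OF n2 _ kle] algebra_simps cong: sum.cong)
  finally have "(2 / real n) * (\<Sum>z\<in>OmegaQ n. PI z * Y z) = 0" by (simp add: algebra_simps)
  then show ?thesis using n4 by simp
qed

lemma PI_V: "(\<Sum>z\<in>OmegaQ n. PI z * (Y z)^2) \<le> real n / 4"
proof -
  define S where "S = (\<Sum>z\<in>OmegaQ n. PI z * (Y z)^2)"
  have "S = (\<Sum>z\<in>OmegaQ n. PI z * Top n (\<lambda>z. (Y z)^2) z)"
    using symm_Top[OF n2, of "del0 n" "\<lambda>z. (Y z)^2"] by (simp add: S_def)
  also have "\<dots> \<le> (\<Sum>z\<in>OmegaQ n. PI z * ((1 - 4 / real n) * (Y z)^2 + 1))"
    by (rule sum_mono) (simp add: mult_left_mono PI_nonneg Top_V[OF n2 _ kle])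
  also have "\<dots> = (1 - 4 / real n) * S + 1"
  proof -
    have "(\<Sum>z\<in>OmegaQ n. PI z * ((1 - 4 / real n) * (Y z)^2 + 1))
        = (\<Sum>z\<in>OmegaQ n. (1 - 4 / real n) * (PI z * (Y z)^2) + PI z)"
      by (rule sum.cong) (simp_all add: algebra_simps)
    also have "\<dots> = (1 - 4 / real n) * S + 1"
      by (simp add: sum.distrib sum_distrib_left[symmetric] PI_total S_def)
    finally show ?thesis .
  qed
  finally have "(4 / real n) * S \<le> 1" by (simp add: algebra_simps)
  then show ?thesis using n4 by (simp add: S_def field_simps)
qed

lemma Y_bound: "z \<in> OmegaQ n \<Longrightarrow> \<bar>Y z\<bar> \<le> real n"
proof -
  assume z: "z \<in> OmegaQ n"
  have g01: "0 \<le> gq z a" "gq z a \<le> 1" for a by (auto simp: gq_def)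
  have A0: "0 \<le> (\<Sum>a<kk. gq z a)" by (rule sum_nonneg) (simp add: g01)
  have A1: "(\<Sum>a<kk. gq z a) \<le> real kk"
    using sum_mono[of "{..<kk}" "gq z" "\<lambda>_. 1"] g01 by simp
  have S0: "0 \<le> Sm n z" unfolding Sm_def by (rule sum_nonneg) (simp add: g01)
  have S1: "Sm n z \<le> real n" unfolding Sm_def
    using sum_mono[of "{..<n}" "gq z" "\<lambda>_. 1"] g01 by simp
  have B0: "0 \<le> real kk * Sm n z / real n" using S0 by simp
  have B1: "real kk * Sm n z / real n \<le> real kk"
    using S1 n4 by (simp add: divide_le_eq mult_left_mono)
  have "real kk \<le> real n" by simp
  then show ?thesis unfolding Yf_def using A0 A1 B0 B1 by linarith
qed

lemma Y0_eq: "Y (x0 n) = real kk - real kk * real kk / real n"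
proof -
  have A: "(\<Sum>a<kk. gq (x0 n) a) = real kk"
    by (simp add: gq_def x0_def nth_append)
  have "Sm n (x0 n) = (\<Sum>a<kk. gq (x0 n) a) + (\<Sum>a=kk..<n. gq (x0 n) a)"
    unfolding Sm_def by (metis kle atLeast0LessThan sum.atLeastLessThan_concat zero_le)
  also have "(\<Sum>a=kk..<n. gq (x0 n) a) = 0"
    by (rule sum.neutral) (auto simp: gq_def x0_def nth_append)
  finally have "Sm n (x0 n) = real kk" using A by simp
  then show ?thesis unfolding Yf_def A by simp
qed

lemma Y0_ge: "real n / 8 \<le> Y (x0 n)"
proof -
  have k1: "real n / 4 \<le> real kk" using n4 by linarith
  have k2: "real n / 2 \<le> real n - real kk" by linarith
  have "Y (x0 n) = real kk * (real n - real kk) / real n" using n4 by (simp add: Y0_eq field_simps)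
  also have "\<dots> \<ge> (real n / 4) * (real n / 2) / real n"
    using k1 k2 n4 by (intro divide_right_mono mult_mono) auto
  finally show ?thesis using n4 by (simp add: field_simps)
qed

lemma lowerA: "(1 - 2 / real n)^t * Y (x0 n) \<le> 2 * real n * tv n (mu n (del0 n) t) PI"
proof -
  have "(\<Sum>z\<in>OmegaQ n. (mu n (del0 n) t z - PI z) * Y z) = (1 - 2 / real n)^t * Y (x0 n)"
    using mu_sum[of t Y] PI_Y It_Y[OF n2 kle x0_in] by (simp add: left_diff_distrib sum_subtractf)
  moreover have "\<bar>\<Sum>z\<in>OmegaQ n. (mu n (del0 n) t z - PI z) * Y z\<bar> \<le> 2 * real n * tv n (mu n (del0 n) t) PI"
    by (rule tv_ge_abs) (rule Y_bound)
  ultimately show ?thesis by simp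
qed


lemma lowerB:
  assumes big: "4 * real n \<le> ((1 - 2 / real n)^t * Y (x0 n))^2"
  shows "1/2 \<le> tv n (mu n (del0 n) t) PI"
proof -
  define c where "c = 1 - 2 / real n"
  define al where "al = 1 - 4 / real n"
  define m where "m = c^t * Y (x0 n)"
  define th where "th = m / 2"
  have c0: "0 < c" using n4 by (simp add: c_def field_simps)
  have al0: "0 \<le> al" using n4 by (simp add: al_def field_simps)
  have "c^2 = al + 4 / real n ^ 2" using n4 by (simp add: al_def c_def power2_eq_square field_simps)
  then have alc: "al \<le> c^2" by simp
  have m0: "0 < m" using Y0_ge n4 c0 by (simp add: m_def)
  have th0: "0 < th" using m0 by (simp add: th_def)
  have mm: "4 * real n \<le> m^2" using big by (simp add: m_def c_def)
  define h where "h z = (if th \<le> Y z then 1 else 0::real)" for z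
  define V where "V z = (Y z)^2" for z
  have Vf: "V = (\<lambda>z. (Y z)^2)" by (simp add: V_def fun_eq_iff)
  have t1: "(\<Sum>z\<in>OmegaQ n. (mu n (del0 n) t z - PI z) * h z) \<le> tv n (mu n (del0 n) t) PI"
    by (rule tv_ge_sum) (auto simp: mu_total PI_total h_def)
  have muh: "(\<Sum>z\<in>OmegaQ n. mu n (del0 n) t z * h z) = (Top n ^^ t) h (x0 n)" by (rule mu_sum)
  have "1 - (Top n ^^ t) h (x0 n) = (Top n ^^ t) (\<lambda>y. 1 * 1 + (-1) * h y) (x0 n)"
    using It_lin[OF x0_in, where t=t and a=1 and f="\<lambda>_. 1" and b="-1" and g=h] It_const[OF n2 x0_in] by simp
  also have "\<dots> \<le> (Top n ^^ t) (\<lambda>y. (1 / th^2) * V y + 1 * ((-2 * m / th^2) * Y y + (m^2 / th^2) * 1)) (x0 n)"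
  proof (rule It_mono[OF n2 x0_in])
    fix y assume "y \<in> OmegaQ n"
    have "1 * 1 + (-1) * h y \<le> (Y y - m)^2 / th^2"
    proof (cases "th \<le> Y y")
      case True then show ?thesis by (simp add: h_def)
    next
      case False
      then have "th \<le> m - Y y" by (simp add: th_def)
      then have "th^2 \<le> (m - Y y)^2" using th0 by (simp add: power_mono)
      then have "1 \<le> (Y y - m)^2 / th^2" using th0 by (simp add: power2_commute)
      then show ?thesis using False by (simp add: h_def)
    qed
    also have "\<dots> = (1 / th^2) * V y + 1 * ((-2 * m / th^2) * Y y + (m^2 / th^2) * 1)"
      using th0 by (simp add: V_def power2_eq_square field_simps)
    finally show "1 * 1 + (-1) * h y \<le> (1 / th^2) * V y + 1 * ((-2 * m / th^2) * Y y + (m^2 / th^2) * 1)" .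
  qed
  also have "\<dots> = (1 / th^2) * (Top n ^^ t) V (x0 n) + ((-2 * m / th^2) * (Top n ^^ t) Y (x0 n) + (m^2 / th^2))"
  proof -
    have e1: "(Top n ^^ t) (\<lambda>y. (1 / th^2) * V y + 1 * ((-2 * m / th^2) * Y y + (m^2 / th^2) * 1)) (x0 n)
      = (1 / th^2) * (Top n ^^ t) V (x0 n) + 1 * (Top n ^^ t) (\<lambda>y. (-2 * m / th^2) * Y y + (m^2 / th^2) * 1) (x0 n)"
      by (rule It_lin[OF x0_in])
    have e2: "(Top n ^^ t) (\<lambda>y. (-2 * m / th^2) * Y y + (m^2 / th^2) * 1) (x0 n)
      = (-2 * m / th^2) * (Top n ^^ t) Y (x0 n) + (m^2 / th^2) * (Top n ^^ t) (\<lambda>y. 1) (x0 n)"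
      by (rule It_lin[OF x0_in])
    show ?thesis unfolding e1 e2 It_const[OF n2 x0_in] by simp
  qed
  also have "\<dots> \<le> (1 / th^2) * (al^t * (Y (x0 n))^2 + real n / 4) + ((-2 * m / th^2) * m + (m^2 / th^2))"
  proof -
    have "(Top n ^^ t) V (x0 n) \<le> al^t * (Y (x0 n))^2 + real n / 4"
      using It_V[OF n4 kle x0_in, of t] unfolding Vf al_def by simp
    moreover have "(Top n ^^ t) Y (x0 n) = m"
      using It_Y[OF n2 kle x0_in] by (simp add: m_def c_def)
    ultimately show ?thesis using th0 by (simp add: divide_right_mono)
  qed
  also have "\<dots> \<le> (1 / th^2) * (real n / 4)"
  proof -
    have "al^t \<le> (c^2)^t" by (rule power_mono[OF alc al0])
    have "(c^2)^t * (Y (x0 n))^2 = m^2"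
      by (simp add: m_def power_mult_distrib power_mult[symmetric] mult.commute)
    then have "al^t * (Y (x0 n))^2 \<le> m^2"
      using \<open>al^t \<le> (c^2)^t\<close> by (metis mult_right_mono zero_le_power2)
    moreover have "(1 / th^2) * (al^t * (Y (x0 n))^2 + real n / 4) + ((-2 * m / th^2) * m + (m^2 / th^2))
        = (1 / th^2) * (real n / 4) + (al^t * (Y (x0 n))^2 - m^2) / th^2"
      using th0 by (simp add: field_simps power2_eq_square)
    moreover have "(al^t * (Y (x0 n))^2 - m^2) / th^2 \<le> 0"
      using calculation(1) th0 by (intro divide_nonpos_pos) simp_all
    ultimately show ?thesis by linarith
  qed
  finally have C1: "1 - (Top n ^^ t) h (x0 n) \<le> (1 / th^2) * (real n / 4)" .
  have "(\<Sum>z\<in>OmegaQ n. PI z * h z) \<le> (\<Sum>z\<in>OmegaQ n. PI z * ((1 / th^2) * V z))"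
  proof (rule sum_mono, rule mult_left_mono)
    fix z
    show "h z \<le> (1 / th^2) * V z"
    proof (cases "th \<le> Y z")
      case True
      then have "th^2 \<le> (Y z)^2" using th0 by (simp add: power_mono)
      then show ?thesis using True th0 by (simp add: h_def V_def)
    qed (simp add: h_def V_def)
  qed (rule PI_nonneg)
  also have "\<dots> = (1 / th^2) * (\<Sum>z\<in>OmegaQ n. PI z * V z)"
    by (simp add: sum_distrib_left algebra_simps)
  also have "\<dots> \<le> (1 / th^2) * (real n / 4)"
    using PI_V by (intro mult_left_mono) (simp_all add: V_def)
  finally have C2: "(\<Sum>z\<in>OmegaQ n. PI z * h z) \<le> (1 / th^2) * (real n / 4)" .
  have XE: "(\<Sum>z\<in>OmegaQ n. (mu n (del0 n) t z - PI z) * h z)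
      = (Top n ^^ t) h (x0 n) - (\<Sum>z\<in>OmegaQ n. PI z * h z)"
    using muh by (simp add: left_diff_distrib sum_subtractf)
  have "1 - 2 * ((1 / th^2) * (real n / 4)) \<le> tv n (mu n (del0 n) t) PI"
  proof -
    have aux: "\<And>X a b T q::real. X = a - b \<Longrightarrow> X \<le> T \<Longrightarrow> 1 - a \<le> q \<Longrightarrow> b \<le> q \<Longrightarrow> 1 - 2 * q \<le> T"
      by linarith
    show ?thesis by (rule aux[OF XE t1 C1 C2])
  qed
  moreover have "(1 / th^2) * (real n / 4) \<le> 1/4"
  proof -
    have "th^2 = m^2 / 4" by (simp add: th_def power2_eq_square)
    then have "(1 / th^2) * (real n / 4) = real n / m^2" using m0 by (simp add: field_simps)
    also have "\<dots> \<le> 1/4" using mm m0 by (simp add: field_simps)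
    finally show ?thesis .
  qed
  ultimately show ?thesis
  proof -
    have aux2: "\<And>a T::real. 1 - 2 * a \<le> T \<Longrightarrow> a \<le> 1/4 \<Longrightarrow> 1/2 \<le> T" by linarith
    assume A: "1 - 2 * ((1 / th^2) * (real n / 4)) \<le> tv n (mu n (del0 n) t) PI"
       and B: "(1 / th^2) * (real n / 4) \<le> 1/4"
    show ?thesis by (rule aux2[OF A B])
  qed
qed

end


lemma exp_le_c: assumes n: "4 \<le> n" shows "exp (- 4 / real n) \<le> 1 - 2 / real n"
proof -
  define x where "x = 2 / real n"
  have x0: "0 \<le> x" and x1: "x \<le> 1/2" using n by (auto simp: x_def field_simps)
  have "- x - 2 * x^2 \<le> ln (1 - x)" by (rule ln_one_minus_pos_lower_bound[OF x0 x1])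
  moreover have "- 2 * x \<le> - x - 2 * x^2"
  proof -
    have "x * x \<le> x * (1/2)" by (rule mult_left_mono[OF x1 x0])
    then show ?thesis by (simp add: power2_eq_square)
  qed
  ultimately have "- 2 * x \<le> ln (1 - x)" by linarith
  then have "exp (- 2 * x) \<le> 1 - x" using x1 by (simp add: ln_ge_iff)
  then show ?thesis by (simp add: x_def)
qed

lemma exp_le_cpow: assumes n: "4 \<le> n" shows "exp (- 4 * real t / real n) \<le> (1 - 2 / real n)^t"
proof -
  have "exp (- 4 * real t / real n) = exp (- 4 / real n) ^ t"
    using exp_of_nat_mult[of t "- 4 / real n"] by (simp add: field_simps)
  also have "\<dots> \<le> (1 - 2 / real n)^t" by (rule power_mono[OF exp_le_c[OF n]]) simp
  finally show ?thesis .
qed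

lemma rho_pow: assumes n: "4 \<le> n" shows "rho n ^ t \<le> exp (- real t / real n)"
proof -
  have r0: "0 \<le> rho n" by (rule rho_nonneg)
  have r1: "rho n \<le> 1 - 1 / real n"
    using n unfolding rho_def by (simp add: field_simps power2_eq_square)
  have "1 - 1 / real n \<le> exp (- 1 / real n)" using exp_ge_add_one_self[of "- 1 / real n"] by simp
  then have "rho n \<le> exp (- 1 / real n)" using r1 by linarith
  then have "rho n ^ t \<le> exp (- 1 / real n) ^ t" by (rule power_mono[OF _ r0])
  also have "\<dots> = exp (- real t / real n)"
    using exp_of_nat_mult[of t "- 1 / real n"] by (simp add: field_simps)
  finally show ?thesis .
qed

lemma upper_t0:
  assumes n: "4 \<le> n" and e: "0 < \<epsilon>" "\<epsilon> < 1/2" and nu: "is_dist n \<nu>"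
  shows "tv n (mu n \<nu> (nat \<lceil>real n * ln (real n / \<epsilon>)\<rceil>)) (symm n \<nu>) \<le> \<epsilon>"
proof -
  define t0 where "t0 = nat \<lceil>real n * ln (real n / \<epsilon>)\<rceil>"
  have nn: "0 < real n" using n by simp
  have lnpos: "0 \<le> ln (real n / \<epsilon>)" using n e by (simp add: field_simps)
  have t0ge: "real n * ln (real n / \<epsilon>) \<le> real t0" unfolding t0_def
    using lnpos nn by (simp add: real_nat_ceiling_ge)
  have "tv n (mu n \<nu> t0) (symm n \<nu>) \<le> rho n ^ t0 * real n" by (rule tv_upper) (use n nu in simp_all)
  also have "\<dots> \<le> exp (- real t0 / real n) * real n" using rho_pow[OF n] nn by (simp add: mult_right_mono)
  also have "\<dots> \<le> exp (- ln (real n / \<epsilon>)) * real n"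
  proof -
    have "ln (real n / \<epsilon>) \<le> real t0 / real n" using t0ge nn by (simp add: field_simps)
    then show ?thesis using nn by (simp add: mult_right_mono)
  qed
  also have "\<dots> = \<epsilon>" using nn e by (simp add: exp_minus field_simps)
  finally show ?thesis by (simp add: t0_def)
qed

lemma lower_t:
  assumes n: "4 \<le> n" and e: "0 < \<epsilon>" "\<epsilon> < 1/2"
    and P: "tv n (mu n (del0 n) t) (symm n (del0 n)) \<le> \<epsilon>"
  shows "real n / 8 * ln (real n / 256) \<le> real t"
    and "real n / 4 * (ln (1 / \<epsilon>) - ln 16) \<le> real t"
proof -
  have nn: "0 < real n" using n by simp
  define c where "c = 1 - 2 / real n"
  define m where "m = c^t * Y n (x0 n)"
  have Y0: "real n / 8 \<le> Y n (x0 n)" by (rule Y0_ge[OF n])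
  have ex: "exp (- 4 * real t / real n) \<le> c^t" unfolding c_def by (rule exp_le_cpow[OF n])
  have mlow: "exp (- 4 * real t / real n) * (real n / 8) \<le> m"
  proof -
    have "0 \<le> c" using n by (simp add: c_def field_simps)
    then have "0 \<le> c^t" by simp
    then show ?thesis unfolding m_def using ex Y0 nn by (intro mult_mono) auto
  qed
  have epos: "0 < exp (- 4 * real t / real n) * (real n / 8)" using nn by simp
  have "\<not> 4 * real n \<le> m^2"
  proof
    assume "4 * real n \<le> m^2"
    then have "1/2 \<le> tv n (mu n (del0 n) t) (symm n (del0 n))"
      using lowerB[OF n, of t] by (simp add: m_def c_def)
    then show False using P e by linarith
  qed
  then have "m^2 < 4 * real n" by simp
  moreover have "(exp (- 4 * real t / real n) * (real n / 8))^2 \<le> m^2"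
    using mlow epos by (intro power_mono) auto
  ultimately have lt: "(exp (- 4 * real t / real n) * (real n / 8))^2 < 4 * real n" by linarith
  have "exp (- 8 * real t / real n) * real n < 256"
  proof -
    define E where "E = exp (- 4 * real t / real n)"
    have EE: "E * E = exp (- 8 * real t / real n)"
      unfolding E_def by (simp add: exp_add[symmetric])
    have "(E * (real n / 8))^2 = (E * E * real n) * real n / 64" by (simp add: power2_eq_square)
    then have "(E * E * real n) * real n < 256 * real n" using lt unfolding E_def[symmetric] by simp
    then have "E * E * real n < 256" using nn by simp
    then show ?thesis using EE by simp
  qed
  then have "exp (- 8 * real t / real n) < 256 / real n" using nn by (simp add: field_simps)
  then have "- 8 * real t / real n < ln (256 / real n)"
    using nn by (metis exp_less_cancel_iff exp_ln divide_pos_pos zero_less_numeral)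
  also have "ln (256 / real n) = - ln (real n / 256)" using nn by (simp add: ln_div)
  finally have "ln (real n / 256) < 8 * real t / real n" by simp
  then show "real n / 8 * ln (real n / 256) \<le> real t" using nn by (simp add: field_simps)
  have "m \<le> 2 * real n * tv n (mu n (del0 n) t) (symm n (del0 n))"
    unfolding m_def c_def by (rule lowerA[OF n])
  also have "\<dots> \<le> 2 * real n * \<epsilon>" using P nn by simp
  finally have "exp (- 4 * real t / real n) * (real n / 8) \<le> 2 * real n * \<epsilon>" using mlow by linarith
  then have "exp (- 4 * real t / real n) \<le> 16 * \<epsilon>" using nn by (simp add: field_simps)
  then have "- 4 * real t / real n \<le> ln (16 * \<epsilon>)" using e by (simp add: ln_ge_iff)
  also have "ln (16 * \<epsilon>) = ln 16 - ln (1 / \<epsilon>)" using e by (simp add: ln_mult ln_div)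
  finally show "real n / 4 * (ln (1 / \<epsilon>) - ln 16) \<le> real t" using nn by (simp add: field_simps)
qed


lemma arith_final:
  fixes n l a e L :: real
  assumes n: "0 < n" and l: "0 < l" and a: "4 * l \<le> a" and e: "0 \<le> e"
    and h1: "n / 8 * (a - 2 * l) \<le> L" and h2: "n / 4 * (e - l) \<le> L"
  shows "1/32 * n * (a + e) \<le> L"
proof -
  have "n / 8 * (a / 2) \<le> n / 8 * (a - 2 * l)" using a n by (intro mult_left_mono) auto
  then have A: "n * a / 16 \<le> L" using h1 by (simp add: field_simps)
  show ?thesis
  proof (cases "2 * l \<le> e")
    case True
    have "n / 4 * (e / 2) \<le> n / 4 * (e - l)" using True n by (intro mult_left_mono) auto
    then have B: "n * e / 8 \<le> L" using h2 by (simp add: field_simps)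
    have "0 \<le> n * a" using n a l by simp
    then have L0: "0 \<le> L" using A by linarith
    have "1/32 * n * (a + e) = (n * a / 16) / 2 + (n * e / 8) / 4" by (simp add: field_simps)
    then show ?thesis using A B L0 by linarith
  next
    case False
    then have "e \<le> a" using a l by linarith
    then have "n * e \<le> n * a" using n by (simp add: mult_left_mono)
    then show ?thesis using A by (simp add: algebra_simps)
  qed
qed

lemma part2:
  assumes n: "65536 \<le> n" and e: "0 < \<epsilon>" "\<epsilon> < 1/2"
  shows "1/32 * real n * ln (real n / \<epsilon>) \<le> real (tmixT n \<epsilon>) \<and>
         real (tmixT n \<epsilon>) \<le> 2 * real n * ln (real n / \<epsilon>)"
proof -
  have n4: "4 \<le> n" using n by simp
  have nn: "0 < real n" using n by simp
  define D where "D = {\<nu>. is_dist n \<nu>}"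
  define P where "P \<nu> t \<longleftrightarrow> tv n (vecmat n \<nu> (matpow n (Tm n) t)) (symm n \<nu>) \<le> \<epsilon>" for \<nu> t
  define F where "F \<nu> = (LEAST t. P \<nu> t)" for \<nu>
  define t0 where "t0 = nat \<lceil>real n * ln (real n / \<epsilon>)\<rceil>"
  have tm: "tmixT n \<epsilon> = Sup (F ` D)" unfolding tmixT_def F_def P_def D_def by simp
  have Pt0: "P \<nu> t0" if "\<nu> \<in> D" for \<nu>
    using upper_t0[OF n4 e] that unfolding P_def D_def t0_def by simp
  have Fle: "F \<nu> \<le> t0" if "\<nu> \<in> D" for \<nu>
    unfolding F_def by (rule Least_le) (rule Pt0[OF that])
  have dD: "del0 n \<in> D" using del0_dist unfolding D_def by simp
  have bdd: "bdd_above (F ` D)" by (rule bdd_aboveI2) (rule Fle)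
  have up: "tmixT n \<epsilon> \<le> t0"
    unfolding tm by (rule cSup_least) (use dD Fle in auto)
  have lnge: "1 \<le> ln (real n / \<epsilon>)"
  proof -
    have "exp 1 \<le> real n / \<epsilon>"
    proof -
      have "exp 1 \<le> (3::real)" by (rule exp_le)
      also have "3 \<le> real n" using n by simp
      also have "real n \<le> real n / \<epsilon>" using e nn by (simp add: field_simps)
      finally show ?thesis .
    qed
    then show ?thesis using nn e by (simp add: ln_ge_iff)
  qed
  have "real t0 \<le> real n * ln (real n / \<epsilon>) + 1"
  proof -
    have "0 \<le> real n * ln (real n / \<epsilon>)" using lnge nn by simp
    then have "real t0 = of_int \<lceil>real n * ln (real n / \<epsilon>)\<rceil>" unfolding t0_def by simp
    also have "\<dots> \<le> real n * ln (real n / \<epsilon>) + 1" by simp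
    finally show ?thesis .
  qed
  also have "\<dots> \<le> 2 * real n * ln (real n / \<epsilon>)"
  proof -
    have "1 \<le> real n * 1" using n by simp
    also have "\<dots> \<le> real n * ln (real n / \<epsilon>)" using lnge nn by (intro mult_left_mono) auto
    finally show ?thesis by simp
  qed
  finally have UP: "real (tmixT n \<epsilon>) \<le> 2 * real n * ln (real n / \<epsilon>)" using up
    by (meson of_nat_le_iff order_trans)
  define L where "L = F (del0 n)"
  have PL: "P (del0 n) L" unfolding L_def F_def by (rule LeastI[of _ t0]) (rule Pt0[OF dD])
  have Lle: "L \<le> tmixT n \<epsilon>" unfolding tm L_def by (rule cSup_upper) (use dD bdd in auto)
  have la: "real n / 8 * ln (real n / 256) \<le> real L"
    and lb: "real n / 4 * (ln (1 / \<epsilon>) - ln 16) \<le> real L"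
    using lower_t[OF n4 e, of L] PL unfolding P_def by auto
  have l16: "0 < ln (16::real)" by simp
  have ln256: "ln (256::real) = 2 * ln 16"
    using ln_realpow[of 16 2] by simp
  have ln65536: "ln (65536::real) = 4 * ln 16"
    using ln_realpow[of 16 4] by simp
  have lnn: "4 * ln 16 \<le> ln (real n)"
  proof -
    have "ln (65536::real) \<le> ln (real n)" using n by simp
    then show ?thesis using ln65536 by simp
  qed
  have e0: "0 \<le> ln (1 / \<epsilon>)" using e by (simp add: field_simps)
  have split1: "ln (real n / \<epsilon>) = ln (real n) + ln (1 / \<epsilon>)" using e nn by (simp add: ln_div)
  have split2: "ln (real n / 256) = ln (real n) - 2 * ln 16" using nn ln256 by (simp add: ln_div)
  have "1/32 * real n * (ln (real n) + ln (1 / \<epsilon>)) \<le> real L"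
    by (rule arith_final[OF nn l16 lnn e0]) (use la lb split2 in simp_all)
  moreover have "real L \<le> real (tmixT n \<epsilon>)" using Lle by simp
  ultimately have LO: "1/32 * real n * ln (real n / \<epsilon>) \<le> real (tmixT n \<epsilon>)"
    unfolding split1 by linarith
  show ?thesis using LO UP by simp
qed

theorem lemma3:
  shows "(\<forall>n\<ge>2. \<forall>\<nu>. is_dist n \<nu> \<longrightarrow>
            (\<forall>q\<in>OmegaQ n. (\<lambda>t. vecmat n \<nu> (matpow n (Tm n) t) q) \<longlonglongrightarrow> symm n \<nu> q))
       \<and> (\<exists>c>0. \<exists>C>0. \<exists>N. \<forall>n\<ge>N. \<forall>\<epsilon>::real. 0 < \<epsilon> \<and> \<epsilon> < 1/2 \<longrightarrow>
            c * real n * ln (real n / \<epsilon>) \<le> real (tmixT n \<epsilon>) \<and>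
            real (tmixT n \<epsilon>) \<le> C * real n * ln (real n / \<epsilon>))"
proof (rule conjI)
  show "\<forall>n\<ge>2. \<forall>\<nu>. is_dist n \<nu> \<longrightarrow>
            (\<forall>q\<in>OmegaQ n. (\<lambda>t. vecmat n \<nu> (matpow n (Tm n) t) q) \<longlonglongrightarrow> symm n \<nu> q)"
    by (intro allI impI ballI) (rule part1)
  have "\<forall>n\<ge>65536. \<forall>\<epsilon>::real. 0 < \<epsilon> \<and> \<epsilon> < 1/2 \<longrightarrow>
            1/32 * real n * ln (real n / \<epsilon>) \<le> real (tmixT n \<epsilon>) \<and>
            real (tmixT n \<epsilon>) \<le> 2 * real n * ln (real n / \<epsilon>)"
    by (intro allI impI) (rule part2, auto)
  then show "\<exists>c>0. \<exists>C>0. \<exists>N. \<forall>n\<ge>N. \<forall>\<epsilon>::real. 0 < \<epsilon> \<and> \<epsilon> < 1/2 \<longrightarrow>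
            c * real n * ln (real n / \<epsilon>) \<le> real (tmixT n \<epsilon>) \<and>
            real (tmixT n \<epsilon>) \<le> C * real n * ln (real n / \<epsilon>)"
    by (intro exI[of _ "1/32"] conjI exI[of _ "2::real"] exI[of _ "65536::nat"]) simp_all
qed


end
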